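(* Let $G$ be a discrete group and $P\subset G$ a subsemigroup with $e\in P$ and $PP^{-1}=G$. Let $V:P\to B(\mathcal{H})$ be an isometric representation with commuting range projections, let $\mathcal{A}$ be the (commutative, unital) $C^*$-algebra generated by $\{E_g:g\in G\}$ and $\Omega$ its spectrum, identified with a subset of $\{0,1\}^G\cong\mathcal{P}(G)$ via $\chi\mapsto A_\chi:=\{g\in G:\chi(E_g)=1\}$ (this identification is a $P$-equivariant topological embedding, where $P$ acts on $\mathcal{P}(G)$ by $A\cdot a=Aa$). Then: (1) for $A\in\Omega$ and $a\in P$, $Aa^{-1}\in\Omega$ if and only if $a\in A$; (2) for $A\in\Omega$ and $g\in G$, $Ag\in\Omega$ if and only if $g^{-1}\in A$; (3) the action map $\Omega\times P\to\Omega$, $(A,a)\mapsto Aa$, is open.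
   Context: An isometric representation with commuting range projections is a map $V:P\to B(\mathcal{H})$ such that each $V_a$ is an isometry, $V_aV_b=V_{ba}$ for $a,b\in P$, and the projections $E_a:=V_aV_a^*$ pairwise commute. For $g=ab^{-1}$ ($a,b\in P$) put $W_g:=V_b^*V_a$ (independent of the choice of $a,b$) and $E_g:=W_gW_g^*$; these are pairwise commuting projections. For $a\in P$, $\alpha_a(T):=V_a^*TV_a$ maps $\mathcal{A}$ into itself as a unital $*$-homomorphism, and $P$ acts on $\Omega$ on the right by $(\chi\cdot a)(T)=\chi(\alpha_a(T))$. $\mathcal{P}(G)\cong\{0,1\}^G$ carries the product topology. *)

theory Defs
  imports "HOL-Analysis.Analysis"
begin

type_synonym 'i vec = "'i \<Rightarrow> complex"
type_synonym 'i op = "'i vec \<Rightarrow> 'i vec"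

definition l2 :: "'i vec set" where
  "l2 = {x. (\<lambda>i. (cmod (x i))\<^sup>2) summable_on UNIV}"

definition l2inner :: "'i vec \<Rightarrow> 'i vec \<Rightarrow> complex" where
  "l2inner x y = (\<Sum>\<^sub>\<infinity>i. cnj (x i) * y i)"

definition l2norm :: "'i vec \<Rightarrow> real" where
  "l2norm x = sqrt (\<Sum>\<^sub>\<infinity>i. (cmod (x i))\<^sup>2)"

text \<open>Bounded linear operators on l2(I); extended by 0 outside l2 so that
  equality of operators is equality of functions.\<close>
definition bop :: "'i op \<Rightarrow> bool" where
  "bop T \<longleftrightarrow> (\<forall>x\<in>l2. T x \<in> l2)
     \<and> (\<forall>x\<in>l2. \<forall>y\<in>l2. \<forall>c. T (\<lambda>i. x i + c * y i) = (\<lambda>i. T x i + c * T y i))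
     \<and> (\<exists>K. \<forall>x\<in>l2. l2norm (T x) \<le> K * l2norm x)
     \<and> (\<forall>x. x \<notin> l2 \<longrightarrow> T x = (\<lambda>i. 0))"

definition Id_op :: "'i op" where
  "Id_op x = (if x \<in> l2 then x else (\<lambda>i. 0))"

definition adj :: "'i op \<Rightarrow> 'i op" where
  "adj T = (THE S. bop S \<and> (\<forall>x\<in>l2. \<forall>y\<in>l2. l2inner (T x) y = l2inner x (S y)))"

definition opnorm :: "'i op \<Rightarrow> real" where
  "opnorm T = Sup {l2norm (T x) | x. x \<in> l2 \<and> l2norm x \<le> 1}"

definition op_add :: "'i op \<Rightarrow> 'i op \<Rightarrow> 'i op" where
  "op_add T U = (\<lambda>x i. T x i + U x i)"

definition op_scale :: "complex \<Rightarrow> 'i op \<Rightarrow> 'i op" where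
  "op_scale c T = (\<lambda>x i. c * T x i)"

definition op_diff :: "'i op \<Rightarrow> 'i op \<Rightarrow> 'i op" where
  "op_diff T U = (\<lambda>x i. T x i - U x i)"

definition isometry :: "'i op \<Rightarrow> bool" where
  "isometry T \<longleftrightarrow> bop T \<and> adj T \<circ> T = Id_op"

definition cstar_gen :: "'i op set \<Rightarrow> 'i op set" where
  "cstar_gen S = \<Inter> {B. S \<subseteq> B \<and> Id_op \<in> B \<and> B \<subseteq> Collect bop
      \<and> (\<forall>T\<in>B. \<forall>U\<in>B. op_add T U \<in> B \<and> T \<circ> U \<in> B)
      \<and> (\<forall>c. \<forall>T\<in>B. op_scale c T \<in> B)
      \<and> (\<forall>T\<in>B. adj T \<in> B)
      \<and> (\<forall>f T. (\<forall>n. f n \<in> B) \<and> bop T \<and> (\<lambda>n. opnorm (op_diff (f n) T)) \<longlonglongrightarrow> 0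
               \<longrightarrow> T \<in> B)}"

definition characters :: "'i op set \<Rightarrow> ('i op \<Rightarrow> complex) set" where
  "characters B = {chr. (\<forall>T\<in>B. \<forall>U\<in>B. chr (op_add T U) = chr T + chr U
                                   \<and> chr (T \<circ> U) = chr T * chr U)
                    \<and> (\<forall>c. \<forall>T\<in>B. chr (op_scale c T) = c * chr T)
                    \<and> (\<exists>T\<in>B. chr T \<noteq> 0)}"

definition Wop :: "('g \<Rightarrow> 'g \<Rightarrow> 'g) \<Rightarrow> ('g \<Rightarrow> 'g) \<Rightarrow> 'g set \<Rightarrow> ('g \<Rightarrow> 'i op) \<Rightarrow> 'g \<Rightarrow> 'i op" where
  "Wop gm ginv P V g = (SOME T. \<exists>a\<in>P. \<exists>b\<in>P. g = gm a (ginv b) \<and> T = adj (V b) \<circ> V a)"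

definition Eop :: "('g \<Rightarrow> 'g \<Rightarrow> 'g) \<Rightarrow> ('g \<Rightarrow> 'g) \<Rightarrow> 'g set \<Rightarrow> ('g \<Rightarrow> 'i op) \<Rightarrow> 'g \<Rightarrow> 'i op" where
  "Eop gm ginv P V g = Wop gm ginv P V g \<circ> adj (Wop gm ginv P V g)"

definition Aalg :: "('g \<Rightarrow> 'g \<Rightarrow> 'g) \<Rightarrow> ('g \<Rightarrow> 'g) \<Rightarrow> 'g set \<Rightarrow> ('g \<Rightarrow> 'i op) \<Rightarrow> 'i op set" where
  "Aalg gm ginv P V = cstar_gen (range (Eop gm ginv P V))"

definition Omega :: "('g \<Rightarrow> 'g \<Rightarrow> 'g) \<Rightarrow> ('g \<Rightarrow> 'g) \<Rightarrow> 'g set \<Rightarrow> ('g \<Rightarrow> 'i op) \<Rightarrow> 'g set set" where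
  "Omega gm ginv P V =
     {{g. chr (Eop gm ginv P V g) = 1} | chr. chr \<in> characters (Aalg gm ginv P V)}"

definition powset_top :: "'g set topology" where
  "powset_top = topology (\<lambda>U. open ((\<lambda>A g. g \<in> A) ` U))"

definition rtrans :: "('g \<Rightarrow> 'g \<Rightarrow> 'g) \<Rightarrow> 'g set \<Rightarrow> 'g \<Rightarrow> 'g set" where
  "rtrans gm A g = (\<lambda>x. gm x g) ` A"

end

theory Submission
  imports Defs
begin

definition nrm2 :: "'i vec \<Rightarrow> real" where
  "nrm2 x = (\<Sum>\<^sub>\<infinity>i. (cmod (x i))\<^sup>2)"

lemma l2norm_nrm2: "l2norm x = sqrt (nrm2 x)"
  by (simp add: l2norm_def nrm2_def)

lemma nrm2_nonneg: "nrm2 x \<ge> 0"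
  unfolding nrm2_def by (rule infsum_nonneg) simp

lemma l2norm_nonneg: "l2norm x \<ge> 0"
  by (simp add: l2norm_nrm2 nrm2_nonneg)

lemma l2norm_sq: "(l2norm x)\<^sup>2 = nrm2 x"
  by (simp add: l2norm_nrm2 nrm2_nonneg)

lemma l2_zero[simp]: "(\<lambda>i. 0) \<in> l2"
  by (simp add: l2_def)

lemma finite_support_summable:
  assumes "finite F" "\<And>i. i \<notin> F \<Longrightarrow> f i = 0"
  shows "f summable_on A"
  by (rule finite_nonzero_values_imp_summable_on) (use assms in \<open>auto intro: finite_subset\<close>)

lemma l2_finite_support:
  assumes "finite F" "\<And>i. i \<notin> F \<Longrightarrow> x i = 0"
  shows "x \<in> l2"
  unfolding l2_def by (auto intro!: finite_support_summable[OF assms(1)] simp: assms(2))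

lemma sq_add_bound: "(cmod (a + b))\<^sup>2 \<le> 2 * (cmod a)\<^sup>2 + 2 * (cmod b)\<^sup>2"
proof -
  have "cmod (a + b) \<le> cmod a + cmod b" by (rule norm_triangle_ineq)
  hence "(cmod (a + b))\<^sup>2 \<le> (cmod a + cmod b)\<^sup>2"
    by (simp add: power_mono)
  also have "\<dots> \<le> 2 * (cmod a)\<^sup>2 + 2 * (cmod b)\<^sup>2"
    by (smt (verit) sum_squares_bound power2_sum)
  finally show ?thesis .
qed

lemma summable_div: "(f::'a\<Rightarrow>real) summable_on A \<Longrightarrow> (\<lambda>x. f x / c) summable_on A"
  using summable_on_cmult_left[of f A "inverse c"] by (simp add: divide_inverse)

lemma infsum_div: "infsum (\<lambda>x. (f::'a\<Rightarrow>real) x / c) A = infsum f A / c"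
  using infsum_cmult_left'[of f "inverse c" A] by (simp add: divide_inverse)

lemma l2_add:
  assumes "x \<in> l2" "y \<in> l2"
  shows "(\<lambda>i. x i + y i) \<in> l2"
proof -
  have "(\<lambda>i. 2 * (cmod (x i))\<^sup>2 + 2 * (cmod (y i))\<^sup>2) summable_on UNIV"
    using assms unfolding l2_def
    by (intro summable_on_add summable_on_cmult_right) auto
  hence "(\<lambda>i. (cmod (x i + y i))\<^sup>2) summable_on UNIV"
    by (rule summable_on_comparison_test) (auto simp: sq_add_bound)
  thus ?thesis by (simp add: l2_def)
qed

lemma l2_scale:
  assumes "x \<in> l2"
  shows "(\<lambda>i. c * x i) \<in> l2"
proof -
  have "(\<lambda>i. (cmod c)\<^sup>2 * (cmod (x i))\<^sup>2) summable_on UNIV"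
    using assms unfolding l2_def by (intro summable_on_cmult_right) auto
  thus ?thesis unfolding l2_def by (simp add: norm_mult power_mult_distrib)
qed

lemma l2_lin:
  assumes "x \<in> l2" "y \<in> l2"
  shows "(\<lambda>i. x i + c * y i) \<in> l2"
  using l2_add[OF assms(1) l2_scale[OF assms(2)]] .

lemma l2_diff:
  assumes "x \<in> l2" "y \<in> l2"
  shows "(\<lambda>i. x i - y i) \<in> l2"
  using l2_lin[OF assms, of "-1"] by simp

lemma l2_summable: "x \<in> l2 \<Longrightarrow> (\<lambda>i. (cmod (x i))\<^sup>2) summable_on UNIV"
  by (simp add: l2_def)

lemma prod_bound: "cmod (cnj a * b) \<le> ((cmod a)\<^sup>2 + (cmod b)\<^sup>2) / 2"
proof -
  have "0 \<le> (cmod a - cmod b)\<^sup>2" by simp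
  thus ?thesis by (simp add: norm_mult power2_diff field_simps)
qed

lemma abs_prod_summable:
  assumes "x \<in> l2" "y \<in> l2"
  shows "(\<lambda>i. cmod (x i) * cmod (y i)) summable_on UNIV"
proof -
  have "(\<lambda>i. ((cmod (x i))\<^sup>2 + (cmod (y i))\<^sup>2) / 2) summable_on UNIV"
    using assms unfolding l2_def
    by (intro summable_div summable_on_add) auto
  thus ?thesis
    by (rule summable_on_comparison_test) (use prod_bound in \<open>auto simp: norm_mult\<close>)
qed

lemma inner_summable:
  assumes "x \<in> l2" "y \<in> l2"
  shows "(\<lambda>i. cnj (x i) * y i) summable_on UNIV"
  unfolding summable_on_iff_abs_summable_on_complex
  using abs_prod_summable[OF assms] by (simp add: norm_mult)

lemma nrm2_zero:
  assumes "x \<in> l2" "nrm2 x = 0"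
  shows "x = (\<lambda>i. 0)"
proof
  fix i
  have "(cmod (x i))\<^sup>2 = 0"
    by (rule nonneg_infsum_le_0D[where A=UNIV]) (use assms in \<open>auto simp: nrm2_def l2_def\<close>)
  thus "x i = 0" by simp
qed

lemma l2norm_zero:
  assumes "x \<in> l2" "l2norm x = 0"
  shows "x = (\<lambda>i. 0)"
  using assms nrm2_zero nrm2_nonneg by (simp add: l2norm_nrm2)

lemma abs_prod_le:
  assumes "x \<in> l2" "y \<in> l2"
  shows "(\<Sum>\<^sub>\<infinity>i. cmod (x i) * cmod (y i)) \<le> l2norm x * l2norm y"
proof (cases "nrm2 x = 0 \<or> nrm2 y = 0")
  case True
  hence "x = (\<lambda>i. 0) \<or> y = (\<lambda>i. 0)" using nrm2_zero assms by blast
  thus ?thesis by (auto simp: l2norm_nonneg)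
next
  case False
  define A where "A = nrm2 x"
  define B where "B = nrm2 y"
  have A: "A > 0" "B > 0" using False nrm2_nonneg A_def B_def
    by (metis order_less_le)+
  define t where "t = sqrt B / sqrt A"
  have t: "t > 0" using A by (simp add: t_def)
  have "(\<Sum>\<^sub>\<infinity>i. cmod (x i) * cmod (y i)) \<le> (\<Sum>\<^sub>\<infinity>i. (t * (cmod (x i))\<^sup>2 + (cmod (y i))\<^sup>2 / t) / 2)"
  proof (rule infsum_mono)
    show "(\<lambda>i. cmod (x i) * cmod (y i)) summable_on UNIV" by (rule abs_prod_summable[OF assms])
    show "(\<lambda>i. (t * (cmod (x i))\<^sup>2 + (cmod (y i))\<^sup>2 / t) / 2) summable_on UNIV"
      using assms unfolding l2_def
      by (intro summable_div summable_on_add summable_on_cmult_right) auto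
    fix i
    have "0 \<le> (t * cmod (x i) - cmod (y i))\<^sup>2" by simp
    hence "2 * t * (cmod (x i) * cmod (y i)) \<le> t\<^sup>2 * (cmod (x i))\<^sup>2 + (cmod (y i))\<^sup>2"
      by (simp add: power2_diff power_mult_distrib algebra_simps)
    thus "cmod (x i) * cmod (y i) \<le> (t * (cmod (x i))\<^sup>2 + (cmod (y i))\<^sup>2 / t) / 2"
      using t by (simp add: field_simps power2_eq_square)
  qed
  also have "\<dots> = (t * A + B / t) / 2"
  proof -
    have s1: "(\<lambda>i. t * (cmod (x i))\<^sup>2) summable_on UNIV" "(\<lambda>i. (cmod (y i))\<^sup>2 / t) summable_on UNIV"
      using assms unfolding l2_def by (auto intro: summable_on_cmult_right summable_div)
    have "(\<Sum>\<^sub>\<infinity>i. (t * (cmod (x i))\<^sup>2 + (cmod (y i))\<^sup>2 / t) / 2)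
        = (\<Sum>\<^sub>\<infinity>i. (t * (cmod (x i))\<^sup>2 + (cmod (y i))\<^sup>2 / t)) / 2"
      by (rule infsum_div)
    also have "\<dots> = ((\<Sum>\<^sub>\<infinity>i. t * (cmod (x i))\<^sup>2) + (\<Sum>\<^sub>\<infinity>i. (cmod (y i))\<^sup>2 / t)) / 2"
      using s1 by (simp add: infsum_add)
    also have "\<dots> = (t * A + B / t) / 2"
      by (simp add: A_def B_def nrm2_def infsum_cmult_right' infsum_div)
    finally show ?thesis .
  qed
  also have "\<dots> = sqrt A * sqrt B"
    using A by (simp add: t_def field_simps)
  also have "\<dots> = l2norm x * l2norm y"
    by (simp add: A_def B_def l2norm_nrm2)
  finally show ?thesis .
qed

lemma cauchy_schwarz:
  assumes "x \<in> l2" "y \<in> l2"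
  shows "cmod (l2inner x y) \<le> l2norm x * l2norm y"
proof -
  have "cmod (l2inner x y) \<le> (\<Sum>\<^sub>\<infinity>i. cmod (cnj (x i) * y i))"
    unfolding l2inner_def
    by (rule norm_infsum_bound) (use abs_prod_summable[OF assms] in \<open>simp add: norm_mult\<close>)
  also have "\<dots> = (\<Sum>\<^sub>\<infinity>i. cmod (x i) * cmod (y i))" by (simp add: norm_mult)
  also have "\<dots> \<le> l2norm x * l2norm y" by (rule abs_prod_le[OF assms])
  finally show ?thesis .
qed

lemma nrm2_scale: "nrm2 (\<lambda>i. c * x i) = (cmod c)\<^sup>2 * nrm2 x"
  by (simp add: nrm2_def norm_mult power_mult_distrib infsum_cmult_right')

lemma l2norm_scale: "l2norm (\<lambda>i. c * x i) = cmod c * l2norm x"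
  by (simp add: l2norm_nrm2 nrm2_scale real_sqrt_mult)

lemma l2norm_triangle:
  assumes "x \<in> l2" "y \<in> l2"
  shows "l2norm (\<lambda>i. x i + y i) \<le> l2norm x + l2norm y"
proof -
  have s: "(\<lambda>i. (cmod (x i))\<^sup>2) summable_on UNIV" "(\<lambda>i. (cmod (y i))\<^sup>2) summable_on UNIV"
    "(\<lambda>i. cmod (x i) * cmod (y i)) summable_on UNIV"
    using assms abs_prod_summable by (auto simp: l2_def)
  have s2: "(\<lambda>i. 2 * (cmod (x i) * cmod (y i))) summable_on UNIV"
    using s(3) by (rule summable_on_cmult_right)
  have "nrm2 (\<lambda>i. x i + y i) \<le> (\<Sum>\<^sub>\<infinity>i. (cmod (x i))\<^sup>2 + (cmod (y i))\<^sup>2 + 2 * (cmod (x i) * cmod (y i)))"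
    unfolding nrm2_def
  proof (rule infsum_mono)
    show "(\<lambda>i. (cmod (x i + y i))\<^sup>2) summable_on UNIV" using l2_add[OF assms] by (simp add: l2_def)
    show "(\<lambda>i. (cmod (x i))\<^sup>2 + (cmod (y i))\<^sup>2 + 2 * (cmod (x i) * cmod (y i))) summable_on UNIV"
      using s s2 by (intro summable_on_add) auto
    fix i
    have "cmod (x i + y i) \<le> cmod (x i) + cmod (y i)" by (rule norm_triangle_ineq)
    hence "(cmod (x i + y i))\<^sup>2 \<le> (cmod (x i) + cmod (y i))\<^sup>2" by (simp add: power_mono)
    thus "(cmod (x i + y i))\<^sup>2 \<le> (cmod (x i))\<^sup>2 + (cmod (y i))\<^sup>2 + 2 * (cmod (x i) * cmod (y i))"
      by (simp add: power2_sum)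
  qed
  also have "\<dots> = nrm2 x + nrm2 y + 2 * (\<Sum>\<^sub>\<infinity>i. cmod (x i) * cmod (y i))"
    using s s2 by (simp add: infsum_add summable_on_add nrm2_def infsum_cmult_right')
  also have "\<dots> \<le> nrm2 x + nrm2 y + 2 * (l2norm x * l2norm y)"
    using abs_prod_le[OF assms] by simp
  also have "\<dots> = (l2norm x + l2norm y)\<^sup>2"
    by (simp add: power2_sum l2norm_sq)
  finally have "nrm2 (\<lambda>i. x i + y i) \<le> (l2norm x + l2norm y)\<^sup>2" .
  hence "sqrt (nrm2 (\<lambda>i. x i + y i)) \<le> sqrt ((l2norm x + l2norm y)\<^sup>2)" by (rule real_sqrt_le_mono)
  thus ?thesis using l2norm_nonneg[of x] l2norm_nonneg[of y] by (simp add: l2norm_nrm2)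
qed

lemma l2inner_lin_right:
  assumes "x \<in> l2" "y \<in> l2" "z \<in> l2"
  shows "l2inner x (\<lambda>i. y i + c * z i) = l2inner x y + c * l2inner x z"
proof -
  have "l2inner x (\<lambda>i. y i + c * z i) = (\<Sum>\<^sub>\<infinity>i. cnj (x i) * y i + c * (cnj (x i) * z i))"
    by (simp add: l2inner_def algebra_simps)
  also have "\<dots> = l2inner x y + (\<Sum>\<^sub>\<infinity>i. c * (cnj (x i) * z i))"
    using inner_summable[OF assms(1,2)] inner_summable[OF assms(1,3)]
    by (subst infsum_add) (auto intro: summable_on_cmult_right simp: l2inner_def)
  also have "\<dots> = l2inner x y + c * l2inner x z"
    by (simp add: infsum_cmult_right' l2inner_def)
  finally show ?thesis .
qed

lemma l2inner_cnj: "l2inner y x = cnj (l2inner x y)"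
  by (simp only: l2inner_def infsum_cnj[symmetric]) (simp add: mult.commute)

lemma l2inner_lin_left:
  assumes "x \<in> l2" "y \<in> l2" "z \<in> l2"
  shows "l2inner (\<lambda>i. x i + c * z i) y = l2inner x y + cnj c * l2inner z y"
proof -
  have "l2inner (\<lambda>i. x i + c * z i) y = cnj (l2inner y (\<lambda>i. x i + c * z i))"
    by (simp add: l2inner_cnj[of y])
  also have "\<dots> = l2inner x y + cnj c * l2inner z y"
    using l2inner_lin_right[OF assms(2,1,3), of c] by (simp add: l2inner_cnj[of y])
  finally show ?thesis .
qed

lemma l2inner_self:
  assumes "x \<in> l2"
  shows "l2inner x x = complex_of_real (nrm2 x)"
proof -
  have "((\<lambda>i. complex_of_real ((cmod (x i))\<^sup>2)) has_sum complex_of_real (nrm2 x)) UNIV"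
    using assms by (intro has_sum_of_real) (simp add: l2_def nrm2_def)
  moreover have "(\<lambda>i. complex_of_real ((cmod (x i))\<^sup>2)) = (\<lambda>i. cnj (x i) * x i)"
    by (rule ext) (metis complex_norm_square mult.commute)
  ultimately show ?thesis by (simp add: l2inner_def infsumI)
qed

definition dlt :: "'i \<Rightarrow> 'i vec" where
  "dlt i = (\<lambda>j. if j = i then 1 else 0)"

lemma dlt_l2[simp]: "dlt i \<in> l2"
  by (rule l2_finite_support[of "{i}"]) (auto simp: dlt_def)

lemma infsum_fin:
  assumes "finite F" "\<And>i. i \<notin> F \<Longrightarrow> f i = 0"
  shows "(\<Sum>\<^sub>\<infinity>i. f i) = sum f F"
proof -
  have "(\<Sum>\<^sub>\<infinity>i. f i) = infsum f F"
    by (rule infsum_cong_neutral) (use assms in auto)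
  thus ?thesis using assms by simp
qed

lemma l2inner_fin:
  assumes "finite F" "\<And>i. i \<notin> F \<Longrightarrow> w i = 0"
  shows "l2inner w z = (\<Sum>i\<in>F. cnj (w i) * z i)"
  unfolding l2inner_def by (rule infsum_fin) (use assms in auto)

lemma l2inner_dlt: "l2inner (dlt i) y = y i"
  by (subst l2inner_fin[of "{i}"]) (auto simp: dlt_def)



section \<open>Bounded operators\<close>

lemma bop_l2: "bop T \<Longrightarrow> x \<in> l2 \<Longrightarrow> T x \<in> l2"
  by (simp add: bop_def)

lemma bop_lin: "bop T \<Longrightarrow> x \<in> l2 \<Longrightarrow> y \<in> l2 \<Longrightarrow> T (\<lambda>i. x i + c * y i) = (\<lambda>i. T x i + c * T y i)"
  by (simp add: bop_def)

lemma bop_out: "bop T \<Longrightarrow> x \<notin> l2 \<Longrightarrow> T x = (\<lambda>i. 0)"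
  by (simp add: bop_def)

lemma bop_zero: assumes "bop T" shows "T (\<lambda>i. 0) = (\<lambda>i. 0)"
proof -
  have "T (\<lambda>i. 0 + 1 * 0) = (\<lambda>i. T (\<lambda>i. 0) i + 1 * T (\<lambda>i. 0) i)"
    by (rule bop_lin[OF assms]) auto
  hence "\<And>i. T (\<lambda>i. 0) i = T (\<lambda>i. 0) i + T (\<lambda>i. 0) i" by (metis add_0 mult_1 mult_zero_right)
  thus ?thesis by auto
qed

lemma bop_scale: assumes "bop T" "x \<in> l2" shows "T (\<lambda>i. c * x i) = (\<lambda>i. c * T x i)"
  using bop_lin[OF assms(1) l2_zero assms(2), of c] bop_zero[OF assms(1)] by simp

lemma bop_add: assumes "bop T" "x \<in> l2" "y \<in> l2" shows "T (\<lambda>i. x i + y i) = (\<lambda>i. T x i + T y i)"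
  using bop_lin[OF assms, of 1] by simp

lemma bop_diff: assumes "bop T" "x \<in> l2" "y \<in> l2" shows "T (\<lambda>i. x i - y i) = (\<lambda>i. T x i - T y i)"
  using bop_lin[OF assms, where c="-1"] by simp

lemma bop_bound: fixes T :: "'i op" assumes "bop T" obtains K where "K \<ge> 0" "\<And>x. x \<in> l2 \<Longrightarrow> l2norm (T x) \<le> K * l2norm x"
proof -
  obtain K where K: "\<forall>x\<in>l2. l2norm (T x) \<le> K * l2norm x" using assms by (auto simp: bop_def)
  have "\<forall>x\<in>l2. l2norm (T x) \<le> max K 0 * l2norm x"
  proof
    fix x :: "'i vec" assume x: "x \<in> l2"
    have "K * l2norm x \<le> max K 0 * l2norm x" by (rule mult_right_mono) (auto simp: l2norm_nonneg)
    thus "l2norm (T x) \<le> max K 0 * l2norm x" using K x by (meson order_trans)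
  qed
  thus ?thesis using that[of "max K 0"] by auto
qed

lemma l2inner_zero_left[simp]: "l2inner (\<lambda>i. 0) y = 0"
  by (simp add: l2inner_def)

lemma l2inner_zero_right[simp]: "l2inner x (\<lambda>i. 0) = 0"
  by (simp add: l2inner_def)

lemma fin_decomp:
  assumes T: "bop T" and y: "y \<in> l2" and F: "finite F"
  shows "(\<forall>i. i \<notin> F \<longrightarrow> w i = 0) \<Longrightarrow> l2inner (T w) y = (\<Sum>i\<in>F. cnj (w i) * l2inner (T (dlt i)) y)"
  using F
proof (induction F arbitrary: w rule: finite_induct)
  case empty
  hence "w = (\<lambda>i. 0)" by auto
  thus ?case using bop_zero[OF T] by simp
next
  case (insert j F)
  define w' where "w' = w(j := 0)"
  have w'F: "\<forall>i. i \<notin> F \<longrightarrow> w' i = 0" using insert by (auto simp: w'_def)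
  have w'l2: "w' \<in> l2" by (rule l2_finite_support[OF insert(1)]) (use w'F in auto)
  have w: "w = (\<lambda>i. w' i + w j * dlt j i)" by (auto simp: w'_def dlt_def)
  have "T w = (\<lambda>i. T w' i + w j * T (dlt j) i)"
    by (subst w, rule bop_lin[OF T w'l2 dlt_l2])
  hence "l2inner (T w) y = l2inner (T w') y + cnj (w j) * l2inner (T (dlt j)) y"
    using bop_l2[OF T] w'l2 y by (simp add: l2inner_lin_left)
  also have "l2inner (T w') y = (\<Sum>i\<in>F. cnj (w' i) * l2inner (T (dlt i)) y)"
    using insert.IH w'F by blast
  also have "\<dots> = (\<Sum>i\<in>F. cnj (w i) * l2inner (T (dlt i)) y)"
    using insert(2) by (intro sum.cong) (auto simp: w'_def)
  finally show ?case using insert(1,2) by (simp add: add.commute)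
qed

lemma cnj_mult_self: "cnj z * z = complex_of_real ((cmod z)\<^sup>2)"
  by (metis complex_norm_square mult.commute)

definition adjc :: "'i op \<Rightarrow> 'i op" where
  "adjc T y = (if y \<in> l2 then (\<lambda>i. l2inner (T (dlt i)) y) else (\<lambda>i. 0))"

lemma adjc_l2:
  assumes T: "bop T" and y: "y \<in> l2"
  shows "adjc T y \<in> l2"
proof -
  obtain K where K: "K \<ge> 0" "\<And>x. x \<in> l2 \<Longrightarrow> l2norm (T x) \<le> K * l2norm x" using bop_bound[OF T] by blast
  define z where "z = (\<lambda>i. l2inner (T (dlt i)) y)"
  have bnd: "(\<Sum>i\<in>F. (cmod (z i))\<^sup>2) \<le> (K * l2norm y)\<^sup>2" if F: "finite F" for F
  proof -
    define w where "w = (\<lambda>i. if i \<in> F then z i else 0)"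
    define s where "s = (\<Sum>i\<in>F. (cmod (z i))\<^sup>2)"
    have s0: "s \<ge> 0" by (simp add: s_def sum_nonneg)
    have wl2: "w \<in> l2" by (rule l2_finite_support[OF F]) (auto simp: w_def)
    have "l2inner (T w) y = (\<Sum>i\<in>F. cnj (w i) * z i)"
      using fin_decomp[OF T y F, of w] by (auto simp: w_def z_def)
    also have "\<dots> = complex_of_real s"
      unfolding s_def of_real_sum by (intro sum.cong) (simp_all only: w_def cnj_mult_self if_True)
    finally have e: "l2inner (T w) y = complex_of_real s" .
    have nw: "nrm2 w = s"
      unfolding nrm2_def s_def by (subst infsum_fin[OF F]) (auto simp: w_def)
    have "s = cmod (l2inner (T w) y)" using e s0 by simp
    also have "\<dots> \<le> l2norm (T w) * l2norm y" by (rule cauchy_schwarz[OF bop_l2[OF T wl2] y])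
    also have "\<dots> \<le> K * l2norm w * l2norm y"
      using K(2)[OF wl2] l2norm_nonneg[of y] by (simp add: mult_right_mono)
    finally have ss: "s \<le> K * l2norm y * sqrt s" by (simp add: l2norm_nrm2 nw mult_ac)
    have "s \<le> (K * l2norm y)\<^sup>2"
    proof (cases "s = 0")
      case True thus ?thesis by simp
    next
      case False
      hence sp: "sqrt s > 0" using s0 by simp
      have "sqrt s * sqrt s = s" using s0 by simp
      hence "sqrt s * sqrt s \<le> K * l2norm y * sqrt s" using ss by linarith
      hence "sqrt s \<le> K * l2norm y" using sp by (rule mult_right_le_imp_le)
      hence "(sqrt s)\<^sup>2 \<le> (K * l2norm y)\<^sup>2" using sp by (intro power_mono) auto
      thus ?thesis using s0 by simp
    qed
    thus ?thesis by (simp add: s_def)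
  qed
  have "(\<lambda>i. (cmod (z i))\<^sup>2) summable_on UNIV"
    by (rule nonneg_bdd_above_summable_on) (auto intro!: bdd_aboveI2[where M="(K * l2norm y)\<^sup>2"] bnd)
  thus ?thesis using y by (simp add: adjc_def z_def l2_def)
qed

lemma nrm2_tail:
  assumes x: "x \<in> l2"
  shows "nrm2 (\<lambda>i. if i \<in> F then 0 else x i) = nrm2 x - (\<Sum>\<^sub>\<infinity>i\<in>F. (cmod (x i))\<^sup>2)"
proof -
  have sx: "(\<lambda>i. (cmod (x i))\<^sup>2) summable_on UNIV" using x by (simp add: l2_def)
  have s1: "(\<lambda>i. (cmod (x i))\<^sup>2) summable_on F" using summable_on_subset[OF sx] by auto
  have s2: "(\<lambda>i. (cmod (x i))\<^sup>2) summable_on (-F)" using summable_on_subset[OF sx] by auto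
  have "nrm2 x = (\<Sum>\<^sub>\<infinity>i\<in>(-F) \<union> F. (cmod (x i))\<^sup>2)" by (simp add: nrm2_def)
  also have "\<dots> = (\<Sum>\<^sub>\<infinity>i\<in>-F. (cmod (x i))\<^sup>2) + (\<Sum>\<^sub>\<infinity>i\<in>F. (cmod (x i))\<^sup>2)"
    by (rule infsum_Un_disjoint[OF s2 s1]) auto
  also have "(\<Sum>\<^sub>\<infinity>i\<in>-F. (cmod (x i))\<^sup>2) = nrm2 (\<lambda>i. if i \<in> F then 0 else x i)"
    unfolding nrm2_def by (rule infsum_cong_neutral) auto
  finally show ?thesis by simp
qed

lemma adjc_adj:
  assumes T: "bop T" and x: "x \<in> l2" and y: "y \<in> l2"
  shows "l2inner (T x) y = l2inner x (adjc T y)"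
proof -
  obtain K where K: "K \<ge> 0" "\<And>x. x \<in> l2 \<Longrightarrow> l2norm (T x) \<le> K * l2norm x" using bop_bound[OF T] by blast
  define z where "z = adjc T y"
  have zl2: "z \<in> l2" using adjc_l2[OF T y] by (simp add: z_def)
  define C where "C = K * l2norm y + l2norm z"
  have C0: "C \<ge> 0" using K l2norm_nonneg[of y] l2norm_nonneg[of z] by (simp add: C_def)
  define D where "D = l2inner (T x) y - l2inner x z"
  have bound: "cmod D \<le> e" if e: "e > 0" for e
  proof -
    define \<epsilon> where "\<epsilon> = (e / (C + 1))\<^sup>2"
    have \<epsilon>: "\<epsilon> > 0" using e C0 by (simp add: \<epsilon>_def)
    have sx: "(\<lambda>i. (cmod (x i))\<^sup>2) summable_on UNIV" using x by (simp add: l2_def)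
    obtain F where F: "finite F" "dist (sum (\<lambda>i. (cmod (x i))\<^sup>2) F) (nrm2 x) \<le> \<epsilon>"
      using infsum_finite_approximation[OF sx \<epsilon>] by (auto simp: nrm2_def)
    define w where "w = (\<lambda>i. if i \<in> F then x i else 0)"
    define r where "r = (\<lambda>i. if i \<in> F then 0 else x i)"
    have wl2: "w \<in> l2" by (rule l2_finite_support[OF F(1)]) (auto simp: w_def)
    have "r = (\<lambda>i. x i - w i)" by (auto simp: r_def w_def)
    hence rl2: "r \<in> l2" using l2_diff[OF x wl2] by simp
    have xwr: "x = (\<lambda>i. w i + 1 * r i)" by (auto simp: w_def r_def)
    have nr: "nrm2 r \<le> \<epsilon>"
    proof -
      have "nrm2 r = nrm2 x - sum (\<lambda>i. (cmod (x i))\<^sup>2) F"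
        unfolding r_def by (subst nrm2_tail[OF x]) (simp add: F(1))
      thus ?thesis using F(2) by (simp add: dist_real_def)
    qed
    have wfin: "l2inner (T w) y = l2inner w z"
      using fin_decomp[OF T y F(1), of w] l2inner_fin[OF F(1), of w z]
      by (auto simp: w_def z_def adjc_def y)
    have "l2inner (T x) y = l2inner (T w) y + l2inner (T r) y"
      by (subst xwr, subst bop_lin[OF T wl2 rl2]) (simp add: l2inner_lin_left[of _ y _ 1, simplified] bop_l2[OF T wl2] bop_l2[OF T rl2] y)
    moreover have "l2inner x z = l2inner w z + l2inner r z"
      by (subst xwr) (simp add: l2inner_lin_left[of _ z _ 1, simplified] wl2 rl2 zl2)
    ultimately have De: "D = l2inner (T r) y - l2inner r z" by (simp add: D_def wfin)
    have "cmod D \<le> cmod (l2inner (T r) y) + cmod (l2inner r z)"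
      unfolding De by (rule norm_triangle_ineq4)
    also have "\<dots> \<le> l2norm (T r) * l2norm y + l2norm r * l2norm z"
      by (intro add_mono cauchy_schwarz bop_l2[OF T] rl2 y zl2)
    also have "\<dots> \<le> K * l2norm r * l2norm y + l2norm r * l2norm z"
      using K(2)[OF rl2] l2norm_nonneg[of y] by (simp add: mult_right_mono)
    also have "\<dots> = l2norm r * C" by (simp add: C_def algebra_simps)
    also have "\<dots> \<le> sqrt \<epsilon> * C"
      using nr C0 by (simp add: l2norm_nrm2 mult_right_mono)
    also have "\<dots> = e / (C + 1) * C" using e C0 by (simp add: \<epsilon>_def)
    also have "\<dots> \<le> e" using e C0 by (simp add: field_simps)
    finally show ?thesis .
  qed
  have "cmod D \<le> 0"
    by (rule field_le_epsilon) (simp add: bound)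
  hence "cmod D = 0" by (simp add: antisym)
  thus ?thesis by (simp add: D_def z_def)
qed

lemma adjc_bop:
  assumes T: "bop T"
  shows "bop (adjc T)"
proof -
  obtain K where K: "K \<ge> 0" "\<And>x. x \<in> l2 \<Longrightarrow> l2norm (T x) \<le> K * l2norm x" using bop_bound[OF T] by blast
  have lin: "adjc T (\<lambda>i. x i + c * y i) = (\<lambda>i. adjc T x i + c * adjc T y i)" if "x \<in> l2" "y \<in> l2" for x y c
    using that l2_lin[OF that] by (auto simp: adjc_def l2inner_lin_right bop_l2[OF T])
  have bnd: "l2norm (adjc T y) \<le> K * l2norm y" if y: "y \<in> l2" for y
  proof -
    define z where "z = adjc T y"
    have zl2: "z \<in> l2" using adjc_l2[OF T y] by (simp add: z_def)
    have "complex_of_real (nrm2 z) = l2inner z z" by (simp add: l2inner_self zl2)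
    also have "\<dots> = l2inner (T z) y" using adjc_adj[OF T zl2 y] by (simp add: z_def)
    finally have "nrm2 z = cmod (l2inner (T z) y)" by (metis norm_of_real nrm2_nonneg abs_of_nonneg)
    also have "\<dots> \<le> l2norm (T z) * l2norm y" by (rule cauchy_schwarz[OF bop_l2[OF T zl2] y])
    also have "\<dots> \<le> K * l2norm z * l2norm y"
      using K(2)[OF zl2] l2norm_nonneg[of y] by (simp add: mult_right_mono)
    finally have ss: "l2norm z * l2norm z \<le> l2norm z * (K * l2norm y)"
      by (simp add: l2norm_sq[symmetric] power2_eq_square mult_ac)
    show ?thesis
    proof (cases "l2norm z = 0")
      case True thus ?thesis using K l2norm_nonneg[of y] by (simp add: z_def)
    next
      case False hence "l2norm z > 0" using l2norm_nonneg[of z] by simp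
      thus ?thesis using ss by (simp add: z_def)
    qed
  qed
  have out: "\<forall>x. x \<notin> l2 \<longrightarrow> adjc T x = (\<lambda>i. 0)" by (simp add: adjc_def)
  have b: "\<exists>K. \<forall>x\<in>l2. l2norm (adjc T x) \<le> K * l2norm x" using bnd by blast
  have l: "\<forall>x\<in>l2. adjc T x \<in> l2" using adjc_l2[OF T] by blast
  have li: "\<forall>x\<in>l2. \<forall>y\<in>l2. \<forall>c. adjc T (\<lambda>i. x i + c * y i) = (\<lambda>i. adjc T x i + c * adjc T y i)"
    using lin by blast
  show ?thesis unfolding bop_def using out b l li by blast
qed

lemma adjoint_unique:
  assumes "bop S1" "bop S2"
    and "\<forall>x\<in>l2. \<forall>y\<in>l2. l2inner (T x) y = l2inner x (S1 y)"
    and "\<forall>x\<in>l2. \<forall>y\<in>l2. l2inner (T x) y = l2inner x (S2 y)"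
  shows "S1 = S2"
proof (rule ext)
  fix y
  show "S1 y = S2 y"
  proof (cases "y \<in> l2")
    case True
    show ?thesis
    proof
      fix i
      have "S1 y i = l2inner (dlt i) (S1 y)" by (simp add: l2inner_dlt)
      also have "\<dots> = l2inner (T (dlt i)) y" using assms(3) True dlt_l2 by metis
      also have "\<dots> = l2inner (dlt i) (S2 y)" using assms(4) True dlt_l2 by metis
      also have "\<dots> = S2 y i" by (simp add: l2inner_dlt)
      finally show "S1 y i = S2 y i" .
    qed
  next
    case False thus ?thesis using assms(1,2) by (simp add: bop_out)
  qed
qed

lemma adj_eq_adjc:
  assumes "bop T" shows "adj T = adjc T"
  unfolding adj_def
proof (rule the_equality)
  show "bop (adjc T) \<and> (\<forall>x\<in>l2. \<forall>y\<in>l2. l2inner (T x) y = l2inner x (adjc T y))"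
    using adjc_bop[OF assms] adjc_adj[OF assms] by blast
  fix S assume "bop S \<and> (\<forall>x\<in>l2. \<forall>y\<in>l2. l2inner (T x) y = l2inner x (S y))"
  thus "S = adjc T"
    using adjoint_unique[of S "adjc T" T] adjc_bop[OF assms] adjc_adj[OF assms] by blast
qed

lemma adj_bop: "bop T \<Longrightarrow> bop (adj T)"
  by (simp add: adj_eq_adjc adjc_bop)

lemma adj_prop: "bop T \<Longrightarrow> x \<in> l2 \<Longrightarrow> y \<in> l2 \<Longrightarrow> l2inner (T x) y = l2inner x (adj T y)"
  by (simp add: adj_eq_adjc adjc_adj)

lemma adj_eqI:
  assumes "bop T" "bop S" "\<And>x y. x \<in> l2 \<Longrightarrow> y \<in> l2 \<Longrightarrow> l2inner (T x) y = l2inner x (S y)"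
  shows "adj T = S"
  by (rule adjoint_unique[OF adj_bop[OF assms(1)] assms(2), where T=T]) (use adj_prop[OF assms(1)] assms(3) in blast)+



lemma bop_Id: "bop Id_op"
  unfolding bop_def Id_op_def
proof (intro conjI ballI allI impI)
  show "\<exists>K. \<forall>x\<in>l2. l2norm (if x \<in> l2 then x else (\<lambda>i. 0)) \<le> K * l2norm x"
    by (rule exI[of _ 1]) simp
qed (auto intro: l2_lin)

lemma Id_op_l2[simp]: "x \<in> l2 \<Longrightarrow> Id_op x = x"
  by (simp add: Id_op_def)

lemma comp_Id: "bop T \<Longrightarrow> T \<circ> Id_op = T"
  by (rule ext) (auto simp: Id_op_def bop_out bop_zero)

lemma Id_comp: assumes "bop T" shows "Id_op \<circ> T = T"
proof (rule ext)
  fix x show "(Id_op \<circ> T) x = T x"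
    by (cases "x \<in> l2") (simp_all add: assms bop_l2 bop_out Id_op_def)
qed

lemma bop_comp:
  fixes T U :: "'i op"
  assumes T: "bop T" and U: "bop U"
  shows "bop (T \<circ> U)"
proof -
  obtain K1 where K1: "K1 \<ge> 0" "\<And>x. x \<in> l2 \<Longrightarrow> l2norm (T x) \<le> K1 * l2norm x" using bop_bound[OF T] by blast
  obtain K2 where K2: "K2 \<ge> 0" "\<And>x. x \<in> l2 \<Longrightarrow> l2norm (U x) \<le> K2 * l2norm x" using bop_bound[OF U] by blast
  have b: "\<forall>x\<in>l2. l2norm ((T \<circ> U) x) \<le> (K1 * K2) * l2norm x"
  proof
    fix x :: "'i vec" assume x: "x \<in> l2"
    have "l2norm (T (U x)) \<le> K1 * l2norm (U x)" using K1(2) bop_l2[OF U x] .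
    also have "\<dots> \<le> K1 * (K2 * l2norm x)" using K2(2)[OF x] K1(1) by (rule mult_left_mono)
    finally show "l2norm ((T \<circ> U) x) \<le> (K1 * K2) * l2norm x" by (simp add: mult_ac)
  qed
  have l: "\<forall>x\<in>l2. (T \<circ> U) x \<in> l2" using T U by (simp add: bop_l2)
  have li: "\<forall>x\<in>l2. \<forall>y\<in>l2. \<forall>c. (T \<circ> U) (\<lambda>i. x i + c * y i) = (\<lambda>i. (T \<circ> U) x i + c * (T \<circ> U) y i)"
    using T U by (simp add: bop_lin bop_l2)
  have out: "\<forall>x. x \<notin> l2 \<longrightarrow> (T \<circ> U) x = (\<lambda>i. 0)" using T U by (simp add: bop_out bop_zero)
  show ?thesis unfolding bop_def using b l li out by blast
qed

lemma bop_op_add: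
  fixes T U :: "'i op"
  assumes T: "bop T" and U: "bop U"
  shows "bop (op_add T U)"
proof -
  obtain K1 where K1: "K1 \<ge> 0" "\<And>x. x \<in> l2 \<Longrightarrow> l2norm (T x) \<le> K1 * l2norm x" using bop_bound[OF T] by blast
  obtain K2 where K2: "K2 \<ge> 0" "\<And>x. x \<in> l2 \<Longrightarrow> l2norm (U x) \<le> K2 * l2norm x" using bop_bound[OF U] by blast
  have b: "\<forall>x\<in>l2. l2norm (op_add T U x) \<le> (K1 + K2) * l2norm x"
  proof
    fix x :: "'i vec" assume x: "x \<in> l2"
    have "l2norm (op_add T U x) \<le> l2norm (T x) + l2norm (U x)"
      unfolding op_add_def by (rule l2norm_triangle) (use T U x bop_l2 in auto)
    also have "\<dots> \<le> (K1 + K2) * l2norm x" using K1(2)[OF x] K2(2)[OF x] by (simp add: distrib_right)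
    finally show "l2norm (op_add T U x) \<le> (K1 + K2) * l2norm x" .
  qed
  have l: "\<forall>x\<in>l2. op_add T U x \<in> l2" using T U by (simp add: bop_l2 l2_add op_add_def)
  have li: "\<forall>x\<in>l2. \<forall>y\<in>l2. \<forall>c. op_add T U (\<lambda>i. x i + c * y i) = (\<lambda>i. op_add T U x i + c * op_add T U y i)"
    using T U by (simp add: bop_lin op_add_def algebra_simps)
  have out: "\<forall>x. x \<notin> l2 \<longrightarrow> op_add T U x = (\<lambda>i. 0)" using T U by (simp add: bop_out op_add_def)
  show ?thesis unfolding bop_def using b l li out by blast
qed

lemma bop_op_scale:
  fixes T :: "'i op"
  assumes T: "bop T"
  shows "bop (op_scale c T)"
proof -
  obtain K1 where K1: "K1 \<ge> 0" "\<And>x. x \<in> l2 \<Longrightarrow> l2norm (T x) \<le> K1 * l2norm x" using bop_bound[OF T] by blast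
  have b: "\<forall>x\<in>l2. l2norm (op_scale c T x) \<le> (cmod c * K1) * l2norm x"
  proof
    fix x :: "'i vec" assume x: "x \<in> l2"
    have "l2norm (op_scale c T x) = cmod c * l2norm (T x)" by (simp add: op_scale_def l2norm_scale)
    also have "\<dots> \<le> cmod c * (K1 * l2norm x)" using K1(2)[OF x] by (rule mult_left_mono) simp
    finally show "l2norm (op_scale c T x) \<le> (cmod c * K1) * l2norm x" by (simp add: mult_ac)
  qed
  have l: "\<forall>x\<in>l2. op_scale c T x \<in> l2" using T by (simp add: bop_l2 l2_scale op_scale_def)
  have li: "\<forall>x\<in>l2. \<forall>y\<in>l2. \<forall>d. op_scale c T (\<lambda>i. x i + d * y i) = (\<lambda>i. op_scale c T x i + d * op_scale c T y i)"
    using T by (simp add: bop_lin op_scale_def algebra_simps)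
  have out: "\<forall>x. x \<notin> l2 \<longrightarrow> op_scale c T x = (\<lambda>i. 0)" using T by (simp add: bop_out op_scale_def)
  show ?thesis unfolding bop_def using b l li out by blast
qed

lemma op_diff_eq: "op_diff T U = op_add T (op_scale (-1) U)"
  by (simp add: op_diff_def op_add_def op_scale_def)

lemma bop_op_diff: "bop T \<Longrightarrow> bop U \<Longrightarrow> bop (op_diff T U)"
  by (simp add: op_diff_eq bop_op_add bop_op_scale)

lemma adj_adj: assumes "bop T" shows "adj (adj T) = T"
proof (rule adj_eqI[OF adj_bop[OF assms] assms])
  fix x y :: "'a vec" assume x: "x \<in> l2" and y: "y \<in> l2"
  have "l2inner (adj T x) y = cnj (l2inner y (adj T x))" by (simp add: l2inner_cnj[of y])
  also have "\<dots> = cnj (l2inner (T y) x)" using adj_prop[OF assms y x] by simp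
  also have "\<dots> = l2inner x (T y)" by (simp add: l2inner_cnj[of x])
  finally show "l2inner (adj T x) y = l2inner x (T y)" .
qed

lemma adj_comp: assumes T: "bop T" and U: "bop U" shows "adj (T \<circ> U) = adj U \<circ> adj T"
proof (rule adj_eqI[OF bop_comp[OF T U] bop_comp[OF adj_bop[OF U] adj_bop[OF T]]])
  fix x y :: "'a vec" assume x: "x \<in> l2" and y: "y \<in> l2"
  show "l2inner ((T \<circ> U) x) y = l2inner x ((adj U \<circ> adj T) y)"
    using adj_prop[OF T bop_l2[OF U x] y] adj_prop[OF U x bop_l2[OF adj_bop[OF T] y]] by simp
qed

lemma adj_Id: "adj Id_op = Id_op"
  by (rule adj_eqI[OF bop_Id bop_Id]) simp

section \<open>Operator norm\<close>

lemma opnorm_set_bdd: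
  assumes T: "bop T"
  shows "bdd_above {l2norm (T x) | x. x \<in> l2 \<and> l2norm x \<le> 1}"
proof -
  obtain K where K: "K \<ge> 0" "\<And>x. x \<in> l2 \<Longrightarrow> l2norm (T x) \<le> K * l2norm x" using bop_bound[OF T] by blast
  show ?thesis
  proof (rule bdd_aboveI)
    fix r assume "r \<in> {l2norm (T x) | x. x \<in> l2 \<and> l2norm x \<le> 1}"
    then obtain x where x: "x \<in> l2" "l2norm x \<le> 1" "r = l2norm (T x)" by blast
    have "r \<le> K * l2norm x" using K(2)[OF x(1)] x(3) by simp
    also have "\<dots> \<le> K" using x(2) K(1) by (simp add: mult_left_le)
    finally show "r \<le> K" .
  qed
qed

lemma opnorm_upper:
  assumes T: "bop T" and x: "x \<in> l2" "l2norm x \<le> 1"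
  shows "l2norm (T x) \<le> opnorm T"
  unfolding opnorm_def by (rule cSup_upper) (use x opnorm_set_bdd[OF T] in auto)

lemma opnorm_nonneg: assumes "bop T" shows "0 \<le> opnorm T"
proof -
  have "l2norm (T (\<lambda>i. 0)) \<le> opnorm T" by (rule opnorm_upper[OF assms]) (simp_all add: l2norm_def)
  thus ?thesis using l2norm_nonneg[of "T (\<lambda>i. 0)"] by linarith
qed

lemma opnorm_bound:
  assumes T: "bop T" and x: "x \<in> l2"
  shows "l2norm (T x) \<le> opnorm T * l2norm x"
proof (cases "l2norm x = 0")
  case True
  hence "x = (\<lambda>i. 0)" using l2norm_zero x by blast
  thus ?thesis using bop_zero[OF T] by (simp add: l2norm_def)
next
  case False
  hence n: "l2norm x > 0" using l2norm_nonneg[of x] by simp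
  define c where "c = complex_of_real (1 / l2norm x)"
  define u where "u = (\<lambda>i. c * x i)"
  have ul2: "u \<in> l2" using l2_scale[OF x] by (simp add: u_def)
  have nu: "l2norm u = 1" unfolding u_def l2norm_scale c_def norm_of_real using n by simp
  have "l2norm (T u) \<le> opnorm T" using opnorm_upper[OF T ul2] nu by simp
  moreover have "l2norm (T u) = l2norm (T x) / l2norm x"
    unfolding u_def bop_scale[OF T x] l2norm_scale c_def norm_of_real using n by simp
  ultimately show ?thesis using n by (simp add: field_simps)
qed

lemma opnorm_le:
  assumes T: "bop T" and C: "C \<ge> 0" and b: "\<And>x. x \<in> l2 \<Longrightarrow> l2norm (T x) \<le> C * l2norm x"
  shows "opnorm T \<le> C"
  unfolding opnorm_def
proof (rule cSup_least)
  have "l2norm (T (\<lambda>i. 0)) \<in> {l2norm (T x) | x. x \<in> l2 \<and> l2norm x \<le> 1}"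
    by (auto simp: l2norm_def intro!: exI[of _ "\<lambda>i. 0"])
  thus "{l2norm (T x) | x. x \<in> l2 \<and> l2norm x \<le> 1} \<noteq> {}" by blast
  fix r assume "r \<in> {l2norm (T x) | x. x \<in> l2 \<and> l2norm x \<le> 1}"
  then obtain x where x: "x \<in> l2" "l2norm x \<le> 1" "r = l2norm (T x)" by blast
  have "r \<le> C * l2norm x" using b[OF x(1)] x(3) by simp
  also have "\<dots> \<le> C" using x(2) C by (simp add: mult_left_le)
  finally show "r \<le> C" .
qed

lemma opnorm_comp:
  fixes T U :: "'i op"
  assumes T: "bop T" and U: "bop U"
  shows "opnorm (T \<circ> U) \<le> opnorm T * opnorm U"
proof (rule opnorm_le[OF bop_comp[OF T U]])
  show "0 \<le> opnorm T * opnorm U" using opnorm_nonneg[OF T] opnorm_nonneg[OF U] by simp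
  fix x :: "'i vec" assume x: "x \<in> l2"
  have "l2norm (T (U x)) \<le> opnorm T * l2norm (U x)" by (rule opnorm_bound[OF T bop_l2[OF U x]])
  also have "\<dots> \<le> opnorm T * (opnorm U * l2norm x)"
    by (rule mult_left_mono[OF opnorm_bound[OF U x] opnorm_nonneg[OF T]])
  finally show "l2norm ((T \<circ> U) x) \<le> opnorm T * opnorm U * l2norm x" by (simp add: mult_ac)
qed

lemma opnorm_add:
  fixes T U :: "'i op"
  assumes T: "bop T" and U: "bop U"
  shows "opnorm (op_add T U) \<le> opnorm T + opnorm U"
proof (rule opnorm_le[OF bop_op_add[OF T U]])
  show "0 \<le> opnorm T + opnorm U" using opnorm_nonneg[OF T] opnorm_nonneg[OF U] by simp
  fix x :: "'i vec" assume x: "x \<in> l2"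
  have "l2norm (op_add T U x) \<le> l2norm (T x) + l2norm (U x)"
    unfolding op_add_def by (rule l2norm_triangle) (use T U x bop_l2 in auto)
  also have "\<dots> \<le> (opnorm T + opnorm U) * l2norm x"
    using opnorm_bound[OF T x] opnorm_bound[OF U x] by (simp add: distrib_right)
  finally show "l2norm (op_add T U x) \<le> (opnorm T + opnorm U) * l2norm x" .
qed

lemma opnorm_zero:
  assumes T: "bop T" and z: "opnorm T \<le> 0"
  shows "T = (\<lambda>x i. 0)"
proof (rule ext)
  fix x show "T x = (\<lambda>i. 0)"
  proof (cases "x \<in> l2")
    case True
    have "l2norm (T x) \<le> opnorm T * l2norm x" by (rule opnorm_bound[OF T True])
    also have "\<dots> \<le> 0" using z l2norm_nonneg[of x] by (simp add: mult_nonpos_nonneg)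
    finally have "l2norm (T x) = 0" using l2norm_nonneg[of "T x"] by simp
    thus ?thesis using l2norm_zero bop_l2[OF T True] by blast
  next
    case False thus ?thesis using T by (simp add: bop_out)
  qed
qed



locale rep =
  fixes gm :: "'g \<Rightarrow> 'g \<Rightarrow> 'g" and e :: 'g and ginv :: "'g \<Rightarrow> 'g"
    and P :: "'g set" and V :: "'g \<Rightarrow> 'i op"
  assumes grp: "group gm e ginv"
    and P_semigroup: "\<forall>a\<in>P. \<forall>b\<in>P. gm a b \<in> P"
    and e_in_P: "e \<in> P"
    and P_generates: "{gm a (ginv b) | a b. a \<in> P \<and> b \<in> P} = UNIV"
    and V_isom: "\<forall>a\<in>P. isometry (V a)"
    and V_mult: "\<forall>a\<in>P. \<forall>b\<in>P. V a \<circ> V b = V (gm b a)"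
    and V_commuting: "\<forall>a\<in>P. \<forall>b\<in>P.
           (V a \<circ> adj (V a)) \<circ> (V b \<circ> adj (V b)) = (V b \<circ> adj (V b)) \<circ> (V a \<circ> adj (V a))"
begin

sublocale G: group gm e ginv by (rule grp)

abbreviation "W \<equiv> Wop gm ginv P V"
abbreviation "E \<equiv> Eop gm ginv P V"
abbreviation "AA \<equiv> Aalg gm ginv P V"

definition Ra :: "'g \<Rightarrow> 'i op" where "Ra a = V a \<circ> adj (V a)"

lemma inv_cancel1[simp]: "gm (ginv x) (gm x y) = y"
  by (simp add: G.assoc[symmetric])
lemma inv_cancel2[simp]: "gm x (gm (ginv x) y) = y"
  by (simp add: G.assoc[symmetric])

lemma PP: "a \<in> P \<Longrightarrow> b \<in> P \<Longrightarrow> gm a b \<in> P"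
  using P_semigroup by blast

lemma G_rep: obtains a b where "a \<in> P" "b \<in> P" "g = gm a (ginv b)"
proof -
  have "g \<in> {gm a (ginv b) | a b. a \<in> P \<and> b \<in> P}" using P_generates by simp
  thus ?thesis using that by blast
qed

lemma Ore: assumes "a \<in> P" "b \<in> P" obtains p q where "p \<in> P" "q \<in> P" "gm a p = gm b q"
proof -
  obtain p q where pq: "p \<in> P" "q \<in> P" "gm (ginv a) b = gm p (ginv q)" using G_rep by blast
  have "gm b q = gm a (gm (gm (ginv a) b) q)" by (simp add: G.assoc)
  also have "\<dots> = gm a p" using pq(3) by (simp add: G.assoc)
  finally show ?thesis using that pq(1,2) by metis
qed

lemma VP: "a \<in> P \<Longrightarrow> bop (V a)"
  using V_isom by (simp add: isometry_def)
lemma VsP: "a \<in> P \<Longrightarrow> bop (adj (V a))"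
  by (simp add: VP adj_bop)
lemma VsV: "a \<in> P \<Longrightarrow> adj (V a) \<circ> V a = Id_op"
  using V_isom by (simp add: isometry_def)
lemma VsV_X: "a \<in> P \<Longrightarrow> bop X \<Longrightarrow> adj (V a) \<circ> (V a \<circ> X) = X"
  by (simp add: comp_assoc[symmetric] VsV Id_comp)
lemma Vmul: "a \<in> P \<Longrightarrow> b \<in> P \<Longrightarrow> V a \<circ> V b = V (gm b a)"
  using V_mult by blast
lemma Vs_mul: "a \<in> P \<Longrightarrow> b \<in> P \<Longrightarrow> adj (V (gm b a)) = adj (V b) \<circ> adj (V a)"
  by (simp add: Vmul[symmetric] adj_comp VP)
lemma adj_Vs: "a \<in> P \<Longrightarrow> adj (adj (V a)) = V a"
  by (simp add: adj_adj VP)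

lemma V_e: "V e = Id_op"
proof -
  have "V e = adj (V e) \<circ> (V e \<circ> V e)" using VsV_X[OF e_in_P VP[OF e_in_P]] by simp
  also have "V e \<circ> V e = V e" using Vmul[OF e_in_P e_in_P] by simp
  finally show ?thesis using VsV[OF e_in_P] by simp
qed

lemma Ra_bop: "a \<in> P \<Longrightarrow> bop (Ra a)"
  by (simp add: Ra_def bop_comp VP VsP)
lemma Ra_e: "Ra e = Id_op"
  by (simp add: Ra_def V_e adj_Id comp_Id bop_Id)
lemma fold_Ra: "V a \<circ> (adj (V a) \<circ> X) = Ra a \<circ> X"
  by (simp add: Ra_def comp_assoc)
lemma fold_Ra': "V a \<circ> adj (V a) = Ra a"
  by (simp add: Ra_def)
lemma Ra_comm: "a \<in> P \<Longrightarrow> b \<in> P \<Longrightarrow> Ra a \<circ> Ra b = Ra b \<circ> Ra a"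
  using V_commuting by (simp add: Ra_def)
lemma Ra_lcomm: "a \<in> P \<Longrightarrow> b \<in> P \<Longrightarrow> Ra a \<circ> (Ra b \<circ> X) = Ra b \<circ> (Ra a \<circ> X)"
  by (simp add: comp_assoc[symmetric] Ra_comm)
lemma Vs_Ra: "a \<in> P \<Longrightarrow> adj (V a) \<circ> Ra a = adj (V a)"
  by (simp add: Ra_def comp_assoc[symmetric] VsV Id_comp VsP)
lemma Vs_Ra_X: "a \<in> P \<Longrightarrow> adj (V a) \<circ> (Ra a \<circ> X) = adj (V a) \<circ> X"
  by (simp add: comp_assoc[symmetric] Vs_Ra)
lemma Ra_V: "a \<in> P \<Longrightarrow> Ra a \<circ> V a = V a"
  by (simp add: Ra_def comp_assoc VsV comp_Id VP)
lemma Ra_V_X: "a \<in> P \<Longrightarrow> Ra a \<circ> (V a \<circ> X) = V a \<circ> X"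
  by (simp add: comp_assoc[symmetric] Ra_V)
lemma Ra_idem: "a \<in> P \<Longrightarrow> Ra a \<circ> Ra a = Ra a"
  by (simp add: Ra_def comp_assoc[symmetric] Ra_V[unfolded Ra_def])
lemma Ra_conj: "x \<in> P \<Longrightarrow> p \<in> P \<Longrightarrow> V p \<circ> (Ra x \<circ> adj (V p)) = Ra (gm x p)"
  by (simp add: Ra_def comp_assoc[symmetric] Vmul Vs_mul[symmetric])
    (simp add: comp_assoc Vs_mul[symmetric] Vmul[symmetric])

lemma stretch: assumes "a \<in> P" "b \<in> P" "p \<in> P" shows "adj (V b) \<circ> V a = adj (V (gm b p)) \<circ> V (gm a p)"
proof -
  have 1: "adj (V (gm b p)) = adj (V b) \<circ> adj (V p)" using Vs_mul[OF assms(3,2)] .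
  have 2: "V (gm a p) = V p \<circ> V a" using Vmul[OF assms(3,1)] by simp
  show ?thesis unfolding 1 2 using assms by (simp add: comp_assoc VsV_X VP)
qed

lemma W_eq:
  assumes "a \<in> P" "b \<in> P" "c \<in> P" "d \<in> P" "gm a (ginv b) = gm c (ginv d)"
  shows "adj (V b) \<circ> V a = adj (V d) \<circ> V c"
proof -
  obtain p q where pq: "p \<in> P" "q \<in> P" "gm b p = gm d q" using Ore[OF assms(2,4)] by blast
  have "gm a p = gm (gm a (ginv b)) (gm b p)" by (simp add: G.assoc)
  also have "\<dots> = gm (gm c (ginv d)) (gm d q)" using assms(5) pq(3) by simp
  also have "\<dots> = gm c q" by (simp add: G.assoc)
  finally have ac: "gm a p = gm c q" .
  have "adj (V b) \<circ> V a = adj (V (gm b p)) \<circ> V (gm a p)" by (rule stretch) (use assms pq in auto)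
  also have "\<dots> = adj (V (gm d q)) \<circ> V (gm c q)" using ac pq by simp
  also have "\<dots> = adj (V d) \<circ> V c" by (rule stretch[symmetric]) (use assms pq in auto)
  finally show ?thesis .
qed

lemma W_rep: assumes "a \<in> P" "b \<in> P" shows "W (gm a (ginv b)) = adj (V b) \<circ> V a"
  unfolding Wop_def
proof (rule someI2[where Q="\<lambda>T. T = adj (V b) \<circ> V a"])
  show "\<exists>a'\<in>P. \<exists>b'\<in>P. gm a (ginv b) = gm a' (ginv b') \<and> adj (V b) \<circ> V a = adj (V b') \<circ> V a'"
    using assms by blast
  fix T assume "\<exists>a'\<in>P. \<exists>b'\<in>P. gm a (ginv b) = gm a' (ginv b') \<and> T = adj (V b') \<circ> V a'"
  then obtain a' b' where "a' \<in> P" "b' \<in> P" "gm a (ginv b) = gm a' (ginv b')" "T = adj (V b') \<circ> V a'" by blast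
  thus "T = adj (V b) \<circ> V a" using W_eq[of a' b' a b] assms by simp
qed

lemma W_bop: "bop (W g)"
proof -
  obtain a b where "a \<in> P" "b \<in> P" "g = gm a (ginv b)" using G_rep by blast
  thus ?thesis by (simp add: W_rep bop_comp VP VsP)
qed

lemma E_rep: assumes "a \<in> P" "b \<in> P" shows "E (gm a (ginv b)) = adj (V b) \<circ> (Ra a \<circ> V b)"
  using assms by (simp add: Eop_def W_rep adj_comp VP VsP adj_Vs Ra_def comp_assoc)

lemma E_bop: "bop (E g)"
  by (simp add: Eop_def bop_comp W_bop adj_bop)

lemma adj_E: "adj (E g) = E g"
  by (simp add: Eop_def adj_comp W_bop adj_bop adj_adj)

lemma E_e: "E e = Id_op"
  using E_rep[OF e_in_P e_in_P] by (simp add: Ra_e V_e adj_Id comp_Id bop_Id)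

lemma E_inv: "a \<in> P \<Longrightarrow> E (ginv a) = Id_op"
  using E_rep[OF e_in_P, of a] by (simp add: Ra_e VsV comp_Id Id_comp VP)

lemma E_P: "a \<in> P \<Longrightarrow> E a = Ra a"
  using E_rep[OF _ e_in_P, of a] by (simp add: V_e adj_Id comp_Id Id_comp Ra_bop)

lemma E_comm: "E g \<circ> E h = E h \<circ> E g"
proof -
  obtain c d where cd: "c \<in> P" "d \<in> P" "g = gm c (ginv d)" using G_rep by blast
  obtain x y where xy: "x \<in> P" "y \<in> P" "h = gm x (ginv y)" using G_rep by blast
  obtain p q where pq: "p \<in> P" "q \<in> P" "gm d p = gm y q" using Ore[OF cd(2) xy(2)] by blast
  define m where "m = gm d p"
  have mP: "m \<in> P" unfolding m_def by (rule PP[OF cd(2) pq(1)])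
  have g: "g = gm (gm c p) (ginv m)" by (simp add: cd m_def G.inverse_distrib_swap G.assoc)
  have h: "h = gm (gm x q) (ginv m)" by (simp add: xy m_def pq G.inverse_distrib_swap G.assoc)
  have uP: "gm c p \<in> P" "gm x q \<in> P" using PP cd xy pq by auto
  have "E g \<circ> E h = adj (V m) \<circ> (Ra (gm c p) \<circ> (Ra m \<circ> (Ra (gm x q) \<circ> V m)))"
    using uP mP by (simp add: g h E_rep comp_assoc fold_Ra)
  also have "\<dots> = adj (V m) \<circ> (Ra (gm x q) \<circ> (Ra m \<circ> (Ra (gm c p) \<circ> V m)))"
    using uP mP by (metis Ra_lcomm)
  also have "\<dots> = E h \<circ> E g"
    using uP mP by (simp add: g h E_rep comp_assoc fold_Ra)
  finally show ?thesis .
qed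

lemma E_comm_X: "E g \<circ> (E h \<circ> X) = E h \<circ> (E g \<circ> X)"
  by (simp add: comp_assoc[symmetric] E_comm)

lemma Phi_E:
  assumes aP: "a \<in> P"
  shows "V a \<circ> (E g \<circ> adj (V a)) = E a \<circ> E (gm g a)"
proof -
  obtain c d where cd: "c \<in> P" "d \<in> P" "g = gm c (ginv d)" using G_rep by blast
  obtain p q where pq: "p \<in> P" "q \<in> P" "gm d p = gm a q" using Ore[OF cd(2) aP] by blast
  have cp: "gm c p \<in> P" using PP cd pq by auto
  have g: "g = gm (gm c p) (ginv (gm a q))"
    by (simp add: cd pq(3)[symmetric] G.inverse_distrib_swap G.assoc)
  have ga: "gm g a = gm (gm c p) (ginv q)"
    by (simp add: g G.inverse_distrib_swap G.assoc)
  have Vaq: "V (gm a q) = V q \<circ> V a" using Vmul[OF pq(2) aP] by simp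
  have Vsaq: "adj (V (gm a q)) = adj (V a) \<circ> adj (V q)" using Vs_mul[OF pq(2) aP] by simp
  have Eg: "E g = adj (V (gm a q)) \<circ> (Ra (gm c p) \<circ> V (gm a q))"
    unfolding g by (rule E_rep[OF cp PP[OF aP pq(2)]])
  have Ega: "E (gm g a) = adj (V q) \<circ> (Ra (gm c p) \<circ> V q)"
    unfolding ga by (rule E_rep[OF cp pq(2)])
  have "V a \<circ> (E g \<circ> adj (V a)) = Ra a \<circ> (E (gm g a) \<circ> Ra a)"
    unfolding Eg Ega Vsaq unfolding Vaq by (simp add: comp_assoc fold_Ra fold_Ra')
  also have "\<dots> = Ra a \<circ> (Ra a \<circ> E (gm g a))"
    using E_comm[of "gm g a" a] aP by (simp add: E_P)
  also have "\<dots> = E a \<circ> E (gm g a)"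
    using aP by (simp add: comp_assoc[symmetric] Ra_idem E_P)
  finally show ?thesis .
qed

lemma alpha_E:
  assumes cP: "c \<in> P"
  shows "adj (V c) \<circ> (E g \<circ> V c) = E (gm g (ginv c))"
proof -
  obtain x y where xy: "x \<in> P" "y \<in> P" "g = gm x (ginv y)" using G_rep by blast
  have ycP: "gm c y \<in> P" using PP cP xy by auto
  have gc: "gm g (ginv c) = gm x (ginv (gm c y))"
    by (simp add: xy G.inverse_distrib_swap G.assoc)
  have 1: "E (gm g (ginv c)) = adj (V (gm c y)) \<circ> (Ra x \<circ> V (gm c y))"
    unfolding gc by (rule E_rep[OF xy(1) ycP])
  have 2: "E g = adj (V y) \<circ> (Ra x \<circ> V y)" unfolding xy(3) by (rule E_rep[OF xy(1,2)])
  have 3: "V (gm c y) = V y \<circ> V c" using Vmul[OF xy(2) cP] by simp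
  have 4: "adj (V (gm c y)) = adj (V c) \<circ> adj (V y)" using Vs_mul[OF xy(2) cP] .
  show ?thesis unfolding 1 2 4 unfolding 3 by (simp add: comp_assoc)
qed

end



lemma comp_op_add_left: "op_add T U \<circ> X = op_add (T \<circ> X) (U \<circ> X)"
  by (simp add: op_add_def fun_eq_iff)

lemma comp_op_scale_left: "op_scale c T \<circ> X = op_scale c (T \<circ> X)"
  by (simp add: op_scale_def fun_eq_iff)

lemma comp_op_diff_left: "op_diff T U \<circ> X = op_diff (T \<circ> X) (U \<circ> X)"
  by (simp add: op_diff_def fun_eq_iff)

lemma comp_op_add_right:
  assumes L: "bop L" and T: "bop T" and U: "bop U"
  shows "L \<circ> op_add T U = op_add (L \<circ> T) (L \<circ> U)"
proof (rule ext)
  fix x show "(L \<circ> op_add T U) x = op_add (L \<circ> T) (L \<circ> U) x"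
  proof (cases "x \<in> l2")
    case True thus ?thesis using bop_add[OF L bop_l2[OF T True] bop_l2[OF U True]] by (simp add: op_add_def)
  next
    case False thus ?thesis using L T U by (simp add: op_add_def bop_out bop_zero)
  qed
qed

lemma comp_op_scale_right:
  assumes L: "bop L" and T: "bop T"
  shows "L \<circ> op_scale c T = op_scale c (L \<circ> T)"
proof (rule ext)
  fix x show "(L \<circ> op_scale c T) x = op_scale c (L \<circ> T) x"
  proof (cases "x \<in> l2")
    case True thus ?thesis using bop_scale[OF L bop_l2[OF T True]] by (simp add: op_scale_def)
  next
    case False thus ?thesis using L T by (simp add: op_scale_def bop_out bop_zero)
  qed
qed

lemma comp_op_diff_right:
  assumes L: "bop L" and T: "bop T" and U: "bop U"
  shows "L \<circ> op_diff T U = op_diff (L \<circ> T) (L \<circ> U)"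
  by (simp add: op_diff_eq comp_op_add_right comp_op_scale_right L T U bop_op_scale)

lemma opnorm_scale:
  fixes T :: "'i op"
  assumes T: "bop T" shows "opnorm (op_scale c T) \<le> cmod c * opnorm T"
proof (rule opnorm_le[OF bop_op_scale[OF T]])
  show "0 \<le> cmod c * opnorm T" using opnorm_nonneg[OF T] by simp
  fix x :: "'i vec" assume x: "x \<in> l2"
  have "l2norm (op_scale c T x) = cmod c * l2norm (T x)" by (simp add: op_scale_def l2norm_scale)
  also have "\<dots> \<le> cmod c * (opnorm T * l2norm x)" by (rule mult_left_mono[OF opnorm_bound[OF T x]]) simp
  finally show "l2norm (op_scale c T x) \<le> cmod c * opnorm T * l2norm x" by (simp add: mult_ac)
qed

lemma le_zero_by_limit:
  fixes d :: "nat \<Rightarrow> real"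
  assumes b: "\<And>n. X \<le> C * d n" and d: "d \<longlonglongrightarrow> 0"
  shows "X \<le> 0"
proof (rule ccontr)
  assume "\<not> X \<le> 0" hence X: "X > 0" by simp
  have "(\<lambda>n. C * d n) \<longlonglongrightarrow> C * 0" by (intro tendsto_intros d)
  hence "eventually (\<lambda>n. C * d n < X) sequentially" using X by (simp add: order_tendstoD(2))
  then obtain N where "\<And>n. n \<ge> N \<Longrightarrow> C * d n < X" by (auto simp: eventually_sequentially)
  thus False using b[of N] by force
qed

lemma tendsto_zero_by_bound:
  fixes d g :: "nat \<Rightarrow> real"
  assumes b: "\<And>n. 0 \<le> g n" "\<And>n. g n \<le> C * d n" and d: "d \<longlonglongrightarrow> 0"
  shows "g \<longlonglongrightarrow> 0"
proof (rule Lim_null_comparison)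
  show "\<forall>\<^sub>F n in sequentially. norm (g n) \<le> C * d n" using b by simp
  show "(\<lambda>n. C * d n) \<longlonglongrightarrow> 0" using tendsto_mult[OF tendsto_const d, of C] by simp
qed

section \<open>The generated C*-algebra\<close>

definition closed_fam :: "'i op set \<Rightarrow> 'i op set \<Rightarrow> bool" where
  "closed_fam S B \<longleftrightarrow> S \<subseteq> B \<and> Id_op \<in> B \<and> B \<subseteq> Collect bop
      \<and> (\<forall>T\<in>B. \<forall>U\<in>B. op_add T U \<in> B \<and> T \<circ> U \<in> B)
      \<and> (\<forall>c. \<forall>T\<in>B. op_scale c T \<in> B)
      \<and> (\<forall>T\<in>B. adj T \<in> B)
      \<and> (\<forall>f T. (\<forall>n. f n \<in> B) \<and> bop T \<and> (\<lambda>n. opnorm (op_diff (f n) T)) \<longlonglongrightarrow> 0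
               \<longrightarrow> T \<in> B)"

lemma cstar_gen_eq: "cstar_gen S = \<Inter> {B. closed_fam S B}"
  by (simp add: cstar_gen_def closed_fam_def)

lemma cg_least: "closed_fam S B \<Longrightarrow> cstar_gen S \<subseteq> B"
  unfolding cstar_gen_eq by blast

lemma cf_parts:
  assumes "closed_fam S B"
  shows "S \<subseteq> B" "Id_op \<in> B" "B \<subseteq> Collect bop"
    "\<forall>T\<in>B. \<forall>U\<in>B. op_add T U \<in> B \<and> T \<circ> U \<in> B"
    "\<forall>c. \<forall>T\<in>B. op_scale c T \<in> B"
    "\<forall>T\<in>B. adj T \<in> B"
    "\<forall>f T. (\<forall>n. f n \<in> B) \<and> bop T \<and> (\<lambda>n. opnorm (op_diff (f n) T)) \<longlonglongrightarrow> 0 \<longrightarrow> T \<in> B"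
  using assms unfolding closed_fam_def by - (elim conjE, assumption)+

lemma cf_gen: "closed_fam S B \<Longrightarrow> S \<subseteq> B" by (rule cf_parts(1))
lemma cf_Id: "closed_fam S B \<Longrightarrow> Id_op \<in> B" by (rule cf_parts(2))
lemma cf_bop: "closed_fam S B \<Longrightarrow> T \<in> B \<Longrightarrow> bop T" using cf_parts(3) by blast
lemma cf_add: "closed_fam S B \<Longrightarrow> T \<in> B \<Longrightarrow> U \<in> B \<Longrightarrow> op_add T U \<in> B" using cf_parts(4) by blast
lemma cf_comp: "closed_fam S B \<Longrightarrow> T \<in> B \<Longrightarrow> U \<in> B \<Longrightarrow> T \<circ> U \<in> B" using cf_parts(4) by blast
lemma cf_scale: "closed_fam S B \<Longrightarrow> T \<in> B \<Longrightarrow> op_scale c T \<in> B" using cf_parts(5) by blast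
lemma cf_adj: "closed_fam S B \<Longrightarrow> T \<in> B \<Longrightarrow> adj T \<in> B" using cf_parts(6) by blast
lemma cf_lim: "closed_fam S B \<Longrightarrow> (\<And>n. f n \<in> B) \<Longrightarrow> bop T \<Longrightarrow> (\<lambda>n. opnorm (op_diff (f n) T)) \<longlonglongrightarrow> 0 \<Longrightarrow> T \<in> B"
  using cf_parts(7) by blast

lemma closed_famI:
  assumes "S \<subseteq> B" "Id_op \<in> B" "\<And>T. T \<in> B \<Longrightarrow> bop T"
    "\<And>T U. T \<in> B \<Longrightarrow> U \<in> B \<Longrightarrow> op_add T U \<in> B"
    "\<And>T U. T \<in> B \<Longrightarrow> U \<in> B \<Longrightarrow> T \<circ> U \<in> B"
    "\<And>c T. T \<in> B \<Longrightarrow> op_scale c T \<in> B"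
    "\<And>T. T \<in> B \<Longrightarrow> adj T \<in> B"
    "\<And>f T. (\<And>n. f n \<in> B) \<Longrightarrow> bop T \<Longrightarrow> (\<lambda>n. opnorm (op_diff (f n) T)) \<longlonglongrightarrow> 0 \<Longrightarrow> T \<in> B"
  shows "closed_fam S B"
proof -
  have 3: "B \<subseteq> Collect bop" using assms(3) by blast
  have 4: "\<forall>T\<in>B. \<forall>U\<in>B. op_add T U \<in> B \<and> T \<circ> U \<in> B" using assms(4,5) by blast
  have 5: "\<forall>c. \<forall>T\<in>B. op_scale c T \<in> B" using assms(6) by blast
  have 6: "\<forall>T\<in>B. adj T \<in> B" using assms(7) by blast
  have 7: "\<forall>f T. (\<forall>n. f n \<in> B) \<and> bop T \<and> (\<lambda>n. opnorm (op_diff (f n) T)) \<longlonglongrightarrow> 0 \<longrightarrow> T \<in> B"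
    using assms(8) by blast
  show ?thesis unfolding closed_fam_def using assms(1,2) 3 4 5 6 7 by (intro conjI)
qed

lemma bop_fam: "S \<subseteq> Collect bop \<Longrightarrow> closed_fam S (Collect bop)"
  by (rule closed_famI) (simp_all add: bop_Id bop_op_add bop_comp bop_op_scale adj_bop)

lemma cg_closed:
  assumes S: "S \<subseteq> Collect bop"
  shows "closed_fam S (cstar_gen S)"
proof (rule closed_famI)
  show "S \<subseteq> cstar_gen S" unfolding cstar_gen_eq using cf_gen by blast
  show "Id_op \<in> cstar_gen S" unfolding cstar_gen_eq using cf_Id by blast
  show "\<And>T. T \<in> cstar_gen S \<Longrightarrow> bop T" using cg_least[OF bop_fam[OF S]] by blast
  show "\<And>T U. T \<in> cstar_gen S \<Longrightarrow> U \<in> cstar_gen S \<Longrightarrow> op_add T U \<in> cstar_gen S"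
    unfolding cstar_gen_eq using cf_add by blast
  show "\<And>T U. T \<in> cstar_gen S \<Longrightarrow> U \<in> cstar_gen S \<Longrightarrow> T \<circ> U \<in> cstar_gen S"
    unfolding cstar_gen_eq using cf_comp by blast
  show "\<And>c T. T \<in> cstar_gen S \<Longrightarrow> op_scale c T \<in> cstar_gen S"
    unfolding cstar_gen_eq using cf_scale by blast
  show "\<And>T. T \<in> cstar_gen S \<Longrightarrow> adj T \<in> cstar_gen S"
    unfolding cstar_gen_eq using cf_adj by blast
  fix f T assume f: "\<And>n. f n \<in> cstar_gen S" and T: "bop T" and l: "(\<lambda>n. opnorm (op_diff (f n) T)) \<longlonglongrightarrow> 0"
  show "T \<in> cstar_gen S" unfolding cstar_gen_eq
  proof
    fix B assume "B \<in> {B. closed_fam S B}"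
    hence B: "closed_fam S B" by simp
    have "\<And>n. f n \<in> B" using f cg_least[OF B] by blast
    thus "T \<in> B" using cf_lim[OF B _ T l] by blast
  qed
qed

lemma cg_map:
  fixes S :: "'i op set" and \<Psi> :: "'i op \<Rightarrow> 'i op"
  assumes S: "S \<subseteq> Collect bop"
  and bop\<Psi>: "\<And>T. bop T \<Longrightarrow> bop (\<Psi> T)"
  and Id: "\<Psi> Id_op \<in> cstar_gen S"
  and gen: "\<And>T. T \<in> S \<Longrightarrow> \<Psi> T \<in> cstar_gen S"
  and add: "\<And>T U. T \<in> cstar_gen S \<Longrightarrow> U \<in> cstar_gen S \<Longrightarrow> \<Psi> (op_add T U) = op_add (\<Psi> T) (\<Psi> U)"
  and mul: "\<And>T U. T \<in> cstar_gen S \<Longrightarrow> U \<in> cstar_gen S \<Longrightarrow> \<Psi> (T \<circ> U) = \<Psi> T \<circ> \<Psi> U"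
  and scl: "\<And>c T. T \<in> cstar_gen S \<Longrightarrow> \<Psi> (op_scale c T) = op_scale c (\<Psi> T)"
  and adj: "\<And>T. T \<in> cstar_gen S \<Longrightarrow> \<Psi> (adj T) = adj (\<Psi> T)"
  and dif: "\<And>T U. bop T \<Longrightarrow> bop U \<Longrightarrow> \<Psi> (op_diff T U) = op_diff (\<Psi> T) (\<Psi> U)"
  and nrm: "\<And>X. bop X \<Longrightarrow> opnorm (\<Psi> X) \<le> C * opnorm X"
  and T: "T \<in> cstar_gen S"
  shows "\<Psi> T \<in> cstar_gen S"
proof -
  define A where "A = cstar_gen S"
  have cA: "closed_fam S A" using cg_closed[OF S] by (simp add: A_def)
  define B where "B = {T \<in> A. \<Psi> T \<in> A}"
  have "closed_fam S B"
  proof (rule closed_famI)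
    show "S \<subseteq> B" using cf_gen[OF cA] gen by (auto simp: B_def A_def)
    show "Id_op \<in> B" using cf_Id[OF cA] Id by (simp add: B_def A_def)
    show "\<And>T. T \<in> B \<Longrightarrow> bop T" using cf_bop[OF cA] by (simp add: B_def)
    show "\<And>T U. T \<in> B \<Longrightarrow> U \<in> B \<Longrightarrow> op_add T U \<in> B"
      using cf_add[OF cA] add by (simp add: B_def A_def)
    show "\<And>T U. T \<in> B \<Longrightarrow> U \<in> B \<Longrightarrow> T \<circ> U \<in> B"
      using cf_comp[OF cA] mul by (simp add: B_def A_def)
    show "\<And>c T. T \<in> B \<Longrightarrow> op_scale c T \<in> B"
      using cf_scale[OF cA] scl by (simp add: B_def A_def)
    show "\<And>T. T \<in> B \<Longrightarrow> adj T \<in> B"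
      using cf_adj[OF cA] adj by (simp add: B_def A_def)
    fix f T assume fB: "\<And>n. f n \<in> B" and Tb: "bop T" and l: "(\<lambda>n. opnorm (op_diff (f n) T)) \<longlonglongrightarrow> 0"
    have fA: "\<And>n. f n \<in> A" and fPA: "\<And>n. \<Psi> (f n) \<in> A" using fB by (auto simp: B_def)
    have TA: "T \<in> A" using cf_lim[OF cA fA Tb l] .
    have fb: "\<And>n. bop (f n)" using fA cf_bop[OF cA] by blast
    have lim: "(\<lambda>n. opnorm (op_diff (\<Psi> (f n)) (\<Psi> T))) \<longlonglongrightarrow> 0"
    proof (rule tendsto_zero_by_bound)
      fix n
      show "0 \<le> opnorm (op_diff (\<Psi> (f n)) (\<Psi> T))"
        by (rule opnorm_nonneg, rule bop_op_diff) (simp_all add: bop\<Psi> fb Tb)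
      show "opnorm (op_diff (\<Psi> (f n)) (\<Psi> T)) \<le> C * opnorm (op_diff (f n) T)"
        using nrm[OF bop_op_diff[OF fb Tb]] dif[OF fb Tb] by simp
    qed (rule l)
    have "\<Psi> T \<in> A" using cf_lim[OF cA fPA bop\<Psi>[OF Tb] lim] .
    thus "T \<in> B" using TA by (simp add: B_def)
  qed
  hence "A \<subseteq> B" using cg_least A_def by blast
  thus ?thesis using T by (auto simp: A_def B_def)
qed

lemma char_map:
  assumes chr: "chr \<in> characters B"
  and maps: "\<And>T. T \<in> B \<Longrightarrow> \<Psi> T \<in> B"
  and add: "\<And>T U. T \<in> B \<Longrightarrow> U \<in> B \<Longrightarrow> \<Psi> (op_add T U) = op_add (\<Psi> T) (\<Psi> U)"
  and mul: "\<And>T U. T \<in> B \<Longrightarrow> U \<in> B \<Longrightarrow> \<Psi> (T \<circ> U) = \<Psi> T \<circ> \<Psi> U"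
  and scl: "\<And>c T. T \<in> B \<Longrightarrow> \<Psi> (op_scale c T) = op_scale c (\<Psi> T)"
  and nz: "T0 \<in> B" "chr (\<Psi> T0) \<noteq> 0"
  shows "(\<lambda>T. chr (\<Psi> T)) \<in> characters B"
proof -
  have c1: "\<forall>T\<in>B. \<forall>U\<in>B. chr (op_add T U) = chr T + chr U \<and> chr (T \<circ> U) = chr T * chr U"
    and c2: "\<forall>c. \<forall>T\<in>B. chr (op_scale c T) = c * chr T"
    using chr by (simp_all add: characters_def)
  have "\<forall>T\<in>B. \<forall>U\<in>B. chr (\<Psi> (op_add T U)) = chr (\<Psi> T) + chr (\<Psi> U) \<and> chr (\<Psi> (T \<circ> U)) = chr (\<Psi> T) * chr (\<Psi> U)"
    using c1 maps add mul by simp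
  moreover have "\<forall>c. \<forall>T\<in>B. chr (\<Psi> (op_scale c T)) = c * chr (\<Psi> T)"
    using c2 maps scl by simp
  moreover have "\<exists>T\<in>B. chr (\<Psi> T) \<noteq> 0" using nz by blast
  ultimately show ?thesis by (simp add: characters_def)
qed



lemma sw_bop: "bop L \<Longrightarrow> bop T \<Longrightarrow> bop R \<Longrightarrow> bop (L \<circ> (T \<circ> R))"
  by (simp add: bop_comp)

lemma sw_add: assumes "bop L" "bop R" "bop T" "bop U"
  shows "L \<circ> (op_add T U \<circ> R) = op_add (L \<circ> (T \<circ> R)) (L \<circ> (U \<circ> R))"
  using assms by (simp add: comp_op_add_left comp_op_add_right bop_comp)

lemma sw_scale: assumes "bop L" "bop R" "bop T"
  shows "L \<circ> (op_scale c T \<circ> R) = op_scale c (L \<circ> (T \<circ> R))"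
  using assms by (simp add: comp_op_scale_left comp_op_scale_right bop_comp)

lemma sw_diff: assumes "bop L" "bop R" "bop T" "bop U"
  shows "L \<circ> (op_diff T U \<circ> R) = op_diff (L \<circ> (T \<circ> R)) (L \<circ> (U \<circ> R))"
  using assms by (simp add: comp_op_diff_left comp_op_diff_right bop_comp)

lemma sw_adj: assumes "bop L" "bop R" "bop T"
  shows "adj (L \<circ> (T \<circ> R)) = adj R \<circ> (adj T \<circ> adj L)"
  using assms by (simp add: adj_comp bop_comp comp_assoc)

lemma sw_nrm: assumes "bop L" "bop R" "bop X"
  shows "opnorm (L \<circ> (X \<circ> R)) \<le> (opnorm L * opnorm R) * opnorm X"
proof -
  have "opnorm (L \<circ> (X \<circ> R)) \<le> opnorm L * opnorm (X \<circ> R)" by (rule opnorm_comp) (simp_all add: assms bop_comp)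
  also have "\<dots> \<le> opnorm L * (opnorm X * opnorm R)"
    by (rule mult_left_mono[OF opnorm_comp opnorm_nonneg]) (simp_all add: assms)
  finally show ?thesis by (simp add: mult_ac)
qed

context rep
begin

lemma AA_def': "AA = cstar_gen (range E)"
  by (simp add: Aalg_def)

lemma S_bop: "range E \<subseteq> Collect bop"
  using E_bop by blast

lemma cA: "closed_fam (range E) AA"
  unfolding AA_def' by (rule cg_closed[OF S_bop])

lemma A_bop: "T \<in> AA \<Longrightarrow> bop T" using cf_bop[OF cA] .
lemma A_bop': "T \<in> cstar_gen (range E) \<Longrightarrow> bop T" by (metis A_bop AA_def')

lemma E_A: "E g \<in> AA" using cf_gen[OF cA] by blast
lemma Id_A: "Id_op \<in> AA" using cf_Id[OF cA] .
lemma comp_A: "T \<in> AA \<Longrightarrow> U \<in> AA \<Longrightarrow> T \<circ> U \<in> AA" using cf_comp[OF cA] .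

definition commE :: "'g \<Rightarrow> 'i op set" where
  "commE g = {T. bop T \<and> T \<circ> E g = E g \<circ> T}"

lemma comm_fam: "closed_fam (range E) (commE g)"
proof (rule closed_famI)
  show "range E \<subseteq> commE g"
  proof
    fix T assume "T \<in> range E"
    then obtain h where h: "T = E h" by blast
    show "T \<in> commE g" unfolding commE_def h using E_bop[of h] E_comm[of h g] by simp
  qed
  show "Id_op \<in> commE g" unfolding commE_def by (simp add: bop_Id comp_Id Id_comp E_bop)
  show "\<And>T. T \<in> commE g \<Longrightarrow> bop T" unfolding commE_def by simp
  show "\<And>T U. T \<in> commE g \<Longrightarrow> U \<in> commE g \<Longrightarrow> op_add T U \<in> commE g"
    unfolding commE_def by (simp add: bop_op_add comp_op_add_left comp_op_add_right E_bop)
  show "\<And>T U. T \<in> commE g \<Longrightarrow> U \<in> commE g \<Longrightarrow> T \<circ> U \<in> commE g"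
  proof -
    fix T U assume "T \<in> commE g" "U \<in> commE g"
    hence T: "bop T" "T \<circ> E g = E g \<circ> T" and U: "bop U" "U \<circ> E g = E g \<circ> U" by (auto simp: commE_def)
    have "T \<circ> U \<circ> E g = T \<circ> (U \<circ> E g)" by (simp add: comp_assoc)
    also have "\<dots> = (T \<circ> E g) \<circ> U" by (simp add: U(2) comp_assoc)
    also have "\<dots> = E g \<circ> (T \<circ> U)" by (simp add: T(2) comp_assoc)
    finally show "T \<circ> U \<in> commE g" unfolding commE_def using T U by (simp add: bop_comp)
  qed
  show "\<And>c T. T \<in> commE g \<Longrightarrow> op_scale c T \<in> commE g"
    unfolding commE_def by (simp add: bop_op_scale comp_op_scale_left comp_op_scale_right E_bop)
  show "\<And>T. T \<in> commE g \<Longrightarrow> adj T \<in> commE g"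
  proof -
    fix T assume "T \<in> commE g"
    hence T: "bop T" "T \<circ> E g = E g \<circ> T" by (auto simp: commE_def)
    have "adj T \<circ> E g = adj (E g \<circ> T)" using T(1) by (simp add: adj_comp E_bop adj_E)
    also have "\<dots> = adj (T \<circ> E g)" using T(2) by simp
    also have "\<dots> = E g \<circ> adj T" using T(1) by (simp add: adj_comp E_bop adj_E)
    finally have c: "adj T \<circ> E g = E g \<circ> adj T" .
    show "adj T \<in> commE g" unfolding commE_def using c adj_bop[OF T(1)] by blast
  qed
  fix f T assume f: "\<And>n. f n \<in> commE g" and T: "bop T"
    and l: "(\<lambda>n. opnorm (op_diff (f n) T)) \<longlonglongrightarrow> 0"
  have fb: "\<And>n. bop (f n)" and fc: "\<And>n. f n \<circ> E g = E g \<circ> f n" using f by (auto simp: commE_def)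
  have Eb: "bop (E g)" by (rule E_bop)
  define X where "X = op_diff (T \<circ> E g) (E g \<circ> T)"
  have Xb: "bop X" by (simp add: X_def bop_op_diff bop_comp T Eb)
  have bnd: "opnorm X \<le> (2 * opnorm (E g)) * opnorm (op_diff (f n) T)" for n
  proof -
    define D where "D = op_diff (f n) T"
    have Db: "bop D" by (simp add: D_def bop_op_diff fb T)
    have "X = op_add (op_scale (-1) (D \<circ> E g)) (E g \<circ> D)"
    proof -
      have "E g \<circ> D = op_diff (E g \<circ> f n) (E g \<circ> T)" by (simp add: D_def comp_op_diff_right Eb fb T)
      thus ?thesis by (simp add: X_def D_def fc[symmetric] op_add_def op_scale_def op_diff_def fun_eq_iff)
    qed
    hence "opnorm X \<le> opnorm (op_scale (-1) (D \<circ> E g)) + opnorm (E g \<circ> D)"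
      using opnorm_add[OF bop_op_scale[OF bop_comp[OF Db Eb]] bop_comp[OF Eb Db]] by simp
    also have "opnorm (op_scale (-1) (D \<circ> E g)) \<le> opnorm (D \<circ> E g)"
      using opnorm_scale[OF bop_comp[OF Db Eb], of "-1"] by simp
    also have "\<dots> \<le> opnorm D * opnorm (E g)" by (rule opnorm_comp[OF Db Eb])
    also have "opnorm (E g \<circ> D) \<le> opnorm (E g) * opnorm D" by (rule opnorm_comp[OF Eb Db])
    finally show ?thesis by (simp add: D_def algebra_simps)
  qed
  have "opnorm X \<le> 0" by (rule le_zero_by_limit[OF bnd l])
  hence X0: "X = (\<lambda>x i. 0)" by (rule opnorm_zero[OF Xb])
  have "T \<circ> E g = E g \<circ> T"
  proof (rule ext)
    fix x have "X x = (\<lambda>i. 0)" using X0 by simp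
    thus "(T \<circ> E g) x = (E g \<circ> T) x" by (simp add: X_def op_diff_def fun_eq_iff)
  qed
  thus "T \<in> commE g" using T by (simp add: commE_def)
qed

lemma A_comm: assumes "T \<in> AA" shows "T \<circ> E g = E g \<circ> T"
proof -
  have "T \<in> commE g" using cg_least[OF comm_fam] assms unfolding AA_def' by blast
  thus ?thesis by (simp add: commE_def)
qed

lemma Phi_maps:
  assumes aP: "a \<in> P" and T: "T \<in> AA"
  shows "V a \<circ> (T \<circ> adj (V a)) \<in> AA"
  unfolding AA_def'
proof (rule cg_map[OF S_bop, where C="opnorm (V a) * opnorm (adj (V a))" and \<Psi>="\<lambda>T. V a \<circ> (T \<circ> adj (V a))" and T=T])
  have L: "bop (V a)" and R: "bop (adj (V a))" using aP by (simp_all add: VP VsP)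
  show "\<And>T. bop T \<Longrightarrow> bop (V a \<circ> (T \<circ> adj (V a)))" using L R by (simp add: bop_comp)
  show "V a \<circ> (Id_op \<circ> adj (V a)) \<in> cstar_gen (range E)"
    using E_A[of a] aP R by (simp add: Id_comp E_P Ra_def AA_def')
  show "\<And>T. T \<in> range E \<Longrightarrow> V a \<circ> (T \<circ> adj (V a)) \<in> cstar_gen (range E)"
  proof -
    fix T assume "T \<in> range E" then obtain h where h: "T = E h" by blast
    show "V a \<circ> (T \<circ> adj (V a)) \<in> cstar_gen (range E)"
      unfolding h Phi_E[OF aP] AA_def'[symmetric] by (rule comp_A[OF E_A E_A])
  qed
  show "\<And>T U. T \<in> cstar_gen (range E) \<Longrightarrow> U \<in> cstar_gen (range E) \<Longrightarrow>
      V a \<circ> (op_add T U \<circ> adj (V a)) = op_add (V a \<circ> (T \<circ> adj (V a))) (V a \<circ> (U \<circ> adj (V a)))"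
    using L R A_bop' by (simp add: sw_add)
  show "\<And>T U. T \<in> cstar_gen (range E) \<Longrightarrow> U \<in> cstar_gen (range E) \<Longrightarrow>
      V a \<circ> (T \<circ> U \<circ> adj (V a)) = V a \<circ> (T \<circ> adj (V a)) \<circ> (V a \<circ> (U \<circ> adj (V a)))"
  proof -
    fix T U assume "T \<in> cstar_gen (range E)" "U \<in> cstar_gen (range E)"
    hence Tb: "bop T" and Ub: "bop U" using A_bop' by simp_all
    show "V a \<circ> (T \<circ> U \<circ> adj (V a)) = V a \<circ> (T \<circ> adj (V a)) \<circ> (V a \<circ> (U \<circ> adj (V a)))"
      using aP Ub R by (simp add: comp_assoc VsV_X bop_comp)
  qed
  show "\<And>c T. T \<in> cstar_gen (range E) \<Longrightarrow>
      V a \<circ> (op_scale c T \<circ> adj (V a)) = op_scale c (V a \<circ> (T \<circ> adj (V a)))"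
    using L R A_bop' by (simp add: sw_scale)
  show "\<And>T. T \<in> cstar_gen (range E) \<Longrightarrow> V a \<circ> (adj T \<circ> adj (V a)) = adj (V a \<circ> (T \<circ> adj (V a)))"
    using L R A_bop' aP by (simp add: sw_adj adj_Vs)
  show "\<And>T U. bop T \<Longrightarrow> bop U \<Longrightarrow>
      V a \<circ> (op_diff T U \<circ> adj (V a)) = op_diff (V a \<circ> (T \<circ> adj (V a))) (V a \<circ> (U \<circ> adj (V a)))"
    using L R by (simp add: sw_diff)
  show "\<And>X. bop X \<Longrightarrow> opnorm (V a \<circ> (X \<circ> adj (V a))) \<le> opnorm (V a) * opnorm (adj (V a)) * opnorm X"
    using L R by (simp add: sw_nrm)
  show "T \<in> cstar_gen (range E)" using T AA_def' by simp
qed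

lemma alpha_maps:
  assumes cP: "c \<in> P" and T: "T \<in> AA"
  shows "adj (V c) \<circ> (T \<circ> V c) \<in> AA"
  unfolding AA_def'
proof (rule cg_map[OF S_bop, where C="opnorm (adj (V c)) * opnorm (V c)" and \<Psi>="\<lambda>T. adj (V c) \<circ> (T \<circ> V c)" and T=T])
  have R: "bop (V c)" and L: "bop (adj (V c))" using cP by (simp_all add: VP VsP)
  show "\<And>T. bop T \<Longrightarrow> bop (adj (V c) \<circ> (T \<circ> V c))" using L R by (simp add: bop_comp)
  show "adj (V c) \<circ> (Id_op \<circ> V c) \<in> cstar_gen (range E)"
    using Id_A cP R by (simp add: Id_comp VsV AA_def')
  show "\<And>T. T \<in> range E \<Longrightarrow> adj (V c) \<circ> (T \<circ> V c) \<in> cstar_gen (range E)"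
  proof -
    fix T assume "T \<in> range E" then obtain h where h: "T = E h" by blast
    show "adj (V c) \<circ> (T \<circ> V c) \<in> cstar_gen (range E)"
      unfolding h alpha_E[OF cP] AA_def'[symmetric] by (rule E_A)
  qed
  show "\<And>T U. T \<in> cstar_gen (range E) \<Longrightarrow> U \<in> cstar_gen (range E) \<Longrightarrow>
      adj (V c) \<circ> (op_add T U \<circ> V c) = op_add (adj (V c) \<circ> (T \<circ> V c)) (adj (V c) \<circ> (U \<circ> V c))"
    using L R A_bop' by (simp add: sw_add)
  show "\<And>T U. T \<in> cstar_gen (range E) \<Longrightarrow> U \<in> cstar_gen (range E) \<Longrightarrow>
      adj (V c) \<circ> (T \<circ> U \<circ> V c) = adj (V c) \<circ> (T \<circ> V c) \<circ> (adj (V c) \<circ> (U \<circ> V c))"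
  proof -
    fix T U assume "T \<in> cstar_gen (range E)" "U \<in> cstar_gen (range E)"
    hence Ub: "bop U" and UA: "U \<in> AA" using A_bop' AA_def' by simp_all
    have "Ra c \<circ> U = U \<circ> Ra c" using A_comm[OF UA, of c] cP by (simp add: E_P)
    hence "Ra c \<circ> (U \<circ> V c) = U \<circ> V c" using cP by (metis comp_assoc Ra_V)
    thus "adj (V c) \<circ> (T \<circ> U \<circ> V c) = adj (V c) \<circ> (T \<circ> V c) \<circ> (adj (V c) \<circ> (U \<circ> V c))"
      by (simp add: comp_assoc fold_Ra)
  qed
  show "\<And>d T. T \<in> cstar_gen (range E) \<Longrightarrow>
      adj (V c) \<circ> (op_scale d T \<circ> V c) = op_scale d (adj (V c) \<circ> (T \<circ> V c))"
    using L R A_bop' by (simp add: sw_scale)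
  show "\<And>T. T \<in> cstar_gen (range E) \<Longrightarrow> adj (V c) \<circ> (adj T \<circ> V c) = adj (adj (V c) \<circ> (T \<circ> V c))"
    using L R A_bop' cP by (simp add: sw_adj adj_Vs)
  show "\<And>T U. bop T \<Longrightarrow> bop U \<Longrightarrow>
      adj (V c) \<circ> (op_diff T U \<circ> V c) = op_diff (adj (V c) \<circ> (T \<circ> V c)) (adj (V c) \<circ> (U \<circ> V c))"
    using L R by (simp add: sw_diff)
  show "\<And>X. bop X \<Longrightarrow> opnorm (adj (V c) \<circ> (X \<circ> V c)) \<le> opnorm (adj (V c)) * opnorm (V c) * opnorm X"
    using L R by (simp add: sw_nrm)
  show "T \<in> cstar_gen (range E)" using T AA_def' by simp
qed

end



context rep
begin

abbreviation "Om \<equiv> Omega gm ginv P V"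

lemma chr_Id:
  assumes chr: "chr \<in> characters AA"
  shows "chr Id_op = 1"
proof -
  obtain T where T: "T \<in> AA" "chr T \<noteq> 0" using chr by (auto simp: characters_def)
  have "chr (T \<circ> Id_op) = chr T * chr Id_op" using chr T(1) Id_A by (simp add: characters_def)
  moreover have "T \<circ> Id_op = T" using A_bop[OF T(1)] by (rule comp_Id)
  ultimately show ?thesis using T(2) by simp
qed

lemma chr_mul: "chr \<in> characters AA \<Longrightarrow> T \<in> AA \<Longrightarrow> U \<in> AA \<Longrightarrow> chr (T \<circ> U) = chr T * chr U"
  by (simp add: characters_def)

lemma Om_mem: "X \<in> Om \<longleftrightarrow> (\<exists>chr. chr \<in> characters AA \<and> X = {g. chr (E g) = 1})"
  by (auto simp: Omega_def)

lemma Om_e: "X \<in> Om \<Longrightarrow> e \<in> X"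
  by (auto simp: Om_mem E_e chr_Id)

lemma rtrans_mem: "g \<in> rtrans gm X h \<longleftrightarrow> gm g (ginv h) \<in> X"
proof
  assume "g \<in> rtrans gm X h"
  then obtain x where "x \<in> X" "g = gm x h" by (auto simp: rtrans_def)
  thus "gm g (ginv h) \<in> X" by (simp add: G.assoc)
next
  assume "gm g (ginv h) \<in> X"
  moreover have "g = gm (gm g (ginv h)) h" by (simp add: G.assoc)
  ultimately show "g \<in> rtrans gm X h" unfolding rtrans_def by blast
qed

lemma rtrans_comp: "rtrans gm (rtrans gm X h) k = rtrans gm X (gm h k)"
  by (simp add: rtrans_def image_image G.assoc)

lemma Phi_Om:
  assumes aP: "a \<in> P" and X: "X \<in> Om" and aX: "a \<in> X"
  shows "rtrans gm X (ginv a) \<in> Om"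
proof -
  obtain chr where chr: "chr \<in> characters AA" and Xe: "X = {g. chr (E g) = 1}" using X Om_mem by blast
  have L: "bop (V a)" and R: "bop (adj (V a))" using aP by (simp_all add: VP VsP)
  define \<Psi> where "\<Psi> = (\<lambda>T. V a \<circ> (T \<circ> adj (V a)))"
  have "(\<lambda>T. chr (\<Psi> T)) \<in> characters AA"
  proof (rule char_map[OF chr])
    show "\<And>T. T \<in> AA \<Longrightarrow> \<Psi> T \<in> AA" unfolding \<Psi>_def by (rule Phi_maps[OF aP])
    show "\<And>T U. T \<in> AA \<Longrightarrow> U \<in> AA \<Longrightarrow> \<Psi> (op_add T U) = op_add (\<Psi> T) (\<Psi> U)"
      unfolding \<Psi>_def using L R A_bop by (simp add: sw_add)
    show "\<And>T U. T \<in> AA \<Longrightarrow> U \<in> AA \<Longrightarrow> \<Psi> (T \<circ> U) = \<Psi> T \<circ> \<Psi> U"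
      unfolding \<Psi>_def using aP A_bop R by (simp add: comp_assoc VsV_X bop_comp)
    show "\<And>c T. T \<in> AA \<Longrightarrow> \<Psi> (op_scale c T) = op_scale c (\<Psi> T)"
      unfolding \<Psi>_def using L R A_bop by (simp add: sw_scale)
    show "Id_op \<in> AA" by (rule Id_A)
    show "chr (\<Psi> Id_op) \<noteq> 0"
      using aX Xe aP R by (simp add: \<Psi>_def Id_comp fold_Ra' E_P)
  qed
  moreover have "{g. chr (\<Psi> (E g)) = 1} = rtrans gm X (ginv a)"
  proof -
    have "chr (\<Psi> (E g)) = chr (E (gm g a))" for g
    proof -
      have "chr (\<Psi> (E g)) = chr (E a \<circ> E (gm g a))" by (simp add: \<Psi>_def Phi_E[OF aP])
      also have "\<dots> = chr (E a) * chr (E (gm g a))" by (rule chr_mul[OF chr E_A E_A])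
      also have "chr (E a) = 1" using aX Xe by simp
      finally show ?thesis by simp
    qed
    thus ?thesis by (auto simp: rtrans_mem Xe)
  qed
  ultimately show ?thesis unfolding Om_mem by blast
qed

lemma alpha_Om:
  assumes cP: "c \<in> P" and X: "X \<in> Om"
  shows "rtrans gm X c \<in> Om"
proof -
  obtain chr where chr: "chr \<in> characters AA" and Xe: "X = {g. chr (E g) = 1}" using X Om_mem by blast
  have R: "bop (V c)" and L: "bop (adj (V c))" using cP by (simp_all add: VP VsP)
  define \<Psi> where "\<Psi> = (\<lambda>T. adj (V c) \<circ> (T \<circ> V c))"
  have "(\<lambda>T. chr (\<Psi> T)) \<in> characters AA"
  proof (rule char_map[OF chr])
    show "\<And>T. T \<in> AA \<Longrightarrow> \<Psi> T \<in> AA" unfolding \<Psi>_def by (rule alpha_maps[OF cP])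
    show "\<And>T U. T \<in> AA \<Longrightarrow> U \<in> AA \<Longrightarrow> \<Psi> (op_add T U) = op_add (\<Psi> T) (\<Psi> U)"
      unfolding \<Psi>_def using L R A_bop by (simp add: sw_add)
    show "\<And>T U. T \<in> AA \<Longrightarrow> U \<in> AA \<Longrightarrow> \<Psi> (T \<circ> U) = \<Psi> T \<circ> \<Psi> U"
    proof -
      fix T U assume UA: "U \<in> AA"
      have "Ra c \<circ> U = U \<circ> Ra c" using A_comm[OF UA, of c] cP by (simp add: E_P)
      hence "Ra c \<circ> (U \<circ> V c) = U \<circ> V c" using cP by (metis comp_assoc Ra_V)
      thus "\<Psi> (T \<circ> U) = \<Psi> T \<circ> \<Psi> U" unfolding \<Psi>_def by (simp add: comp_assoc fold_Ra)
    qed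
    show "\<And>d T. T \<in> AA \<Longrightarrow> \<Psi> (op_scale d T) = op_scale d (\<Psi> T)"
      unfolding \<Psi>_def using L R A_bop by (simp add: sw_scale)
    show "Id_op \<in> AA" by (rule Id_A)
    show "chr (\<Psi> Id_op) \<noteq> 0"
      using cP R chr_Id[OF chr] by (simp add: \<Psi>_def Id_comp VsV)
  qed
  moreover have "{g. chr (\<Psi> (E g)) = 1} = rtrans gm X c"
    by (auto simp: \<Psi>_def alpha_E[OF cP] rtrans_mem Xe)
  ultimately show ?thesis unfolding Om_mem by blast
qed

lemma part1: "\<forall>A\<in>Om. \<forall>a\<in>P. rtrans gm A (ginv a) \<in> Om \<longleftrightarrow> a \<in> A"
proof (intro ballI iffI)
  fix A a assume A: "A \<in> Om" and aP: "a \<in> P"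
  { assume "rtrans gm A (ginv a) \<in> Om"
    hence "e \<in> rtrans gm A (ginv a)" by (rule Om_e)
    thus "a \<in> A" by (simp add: rtrans_mem G.group_left_neutral) }
  { assume "a \<in> A" thus "rtrans gm A (ginv a) \<in> Om" using Phi_Om[OF aP A] by blast }
qed

lemma part2: "\<forall>A\<in>Om. \<forall>g. rtrans gm A g \<in> Om \<longleftrightarrow> ginv g \<in> A"
proof (intro ballI allI iffI)
  fix A g assume A: "A \<in> Om"
  { assume "rtrans gm A g \<in> Om"
    hence "e \<in> rtrans gm A g" by (rule Om_e)
    thus "ginv g \<in> A" by (simp add: rtrans_mem G.group_left_neutral) }
  { assume gA: "ginv g \<in> A"
    obtain c d where cd: "c \<in> P" "d \<in> P" "g = gm c (ginv d)" using G_rep by blast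
    have Y: "rtrans gm A c \<in> Om" by (rule alpha_Om[OF cd(1) A])
    have "d \<in> rtrans gm A c" using gA by (simp add: rtrans_mem cd(3) G.inverse_distrib_swap)
    hence "rtrans gm (rtrans gm A c) (ginv d) \<in> Om" using part1 Y cd(2) by blast
    thus "rtrans gm A g \<in> Om" by (simp add: rtrans_comp cd(3)) }
qed

end



definition chf :: "'g set \<Rightarrow> 'g \<Rightarrow> bool" where "chf A = (\<lambda>g. g \<in> A)"

lemma chf_inj: "inj chf"
  by (rule injI) (auto simp: chf_def fun_eq_iff)

lemma chf_Collect[simp]: "chf (Collect f) = f"
  by (simp add: chf_def)

lemma chf_image: "chf ` Q = {f. Collect f \<in> Q}"
proof
  show "chf ` Q \<subseteq> {f. Collect f \<in> Q}" by (auto simp: chf_def)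
  show "{f. Collect f \<in> Q} \<subseteq> chf ` Q"
  proof
    fix f assume "f \<in> {f. Collect f \<in> Q}"
    hence "Collect f \<in> Q" by simp
    moreover have "f = chf (Collect f)" by simp
    ultimately show "f \<in> chf ` Q" by blast
  qed
qed

lemma istop_powset: "istopology (\<lambda>U. open ((\<lambda>A g. g \<in> A) ` (U :: 'g set set)))"
  unfolding istopology_def
proof (intro conjI allI impI)
  have inj: "inj (\<lambda>(A::'g set) g. g \<in> A)" using chf_inj[unfolded chf_def[abs_def]] .
  fix S T :: "'g set set"
  assume "open ((\<lambda>A g. g \<in> A) ` S)" "open ((\<lambda>A g. g \<in> A) ` T)"
  thus "open ((\<lambda>A g. g \<in> A) ` (S \<inter> T))" by (simp add: image_Int[OF inj] open_Int)
next
  fix K :: "'g set set set"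
  assume "\<forall>S\<in>K. open ((\<lambda>A g. g \<in> A) ` S)"
  hence "open (\<Union>S\<in>K. (\<lambda>A g. g \<in> A) ` S)" by (intro open_UN) blast
  thus "open ((\<lambda>A g. g \<in> A) ` \<Union>K)" by (simp add: image_Union)
qed

lemma openin_powset: "openin powset_top U \<longleftrightarrow> open (chf ` U)"
  unfolding powset_top_def topology_inverse'[OF istop_powset] by (simp add: chf_def[abs_def])

lemma topspace_powset: "topspace powset_top = UNIV"
proof -
  have "openin powset_top UNIV" unfolding openin_powset chf_image by simp
  thus ?thesis using openin_subset by blast
qed

lemma open_coord: "open {f :: 'g \<Rightarrow> bool. f a}"
proof -
  have "{f :: 'g \<Rightarrow> bool. f a} = (\<lambda>f. f a) -` {True}" by auto
  moreover have "open ((\<lambda>f :: 'g \<Rightarrow> bool. f a) -` {True})"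
    by (rule open_vimage) (simp_all add: open_discrete)
  ultimately show ?thesis by simp
qed

lemma open_shift:
  fixes h :: "'g \<Rightarrow> 'g"
  assumes "open Op"
  shows "open ((\<lambda>f :: 'g \<Rightarrow> bool. \<lambda>g. f (h g)) -` Op)"
proof (rule open_vimage[OF assms])
  show "continuous_on UNIV (\<lambda>f :: 'g \<Rightarrow> bool. \<lambda>g. f (h g))"
    by (rule continuous_on_coordinatewise_then_product) simp
qed

context rep
begin

lemma Om_inv: "X \<in> Om \<Longrightarrow> a \<in> P \<Longrightarrow> ginv a \<in> X"
  by (auto simp: Om_mem E_inv chr_Id)

lemma rtrans_e: "rtrans gm X e = X"
  by (simp add: rtrans_def)

lemma rtrans_Om: "X \<in> Om \<Longrightarrow> a \<in> P \<Longrightarrow> rtrans gm X a \<in> Om"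
  using part2 Om_inv by blast

lemma image_open:
  assumes U: "openin (subtopology powset_top Om) U" and aP: "a \<in> P"
  shows "openin (subtopology powset_top Om) ((\<lambda>A. rtrans gm A a) ` U)"
proof -
  obtain Op where Op: "openin powset_top Op" "U = Op \<inter> Om" using U by (auto simp: openin_subtopology)
  define Q where "Q = {B. a \<in> B \<and> rtrans gm B (ginv a) \<in> Op}"
  have eq: "(\<lambda>A. rtrans gm A a) ` U = Q \<inter> Om"
  proof
    show "(\<lambda>A. rtrans gm A a) ` U \<subseteq> Q \<inter> Om"
    proof
      fix B assume "B \<in> (\<lambda>A. rtrans gm A a) ` U"
      then obtain A where A: "A \<in> Op" "A \<in> Om" "B = rtrans gm A a" using Op by auto
      have "a \<in> B" using Om_e[OF A(2)] by (simp add: A(3) rtrans_mem)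
      moreover have "rtrans gm B (ginv a) = A" by (simp add: A(3) rtrans_comp rtrans_e)
      moreover have "B \<in> Om" using rtrans_Om[OF A(2) aP] A(3) by simp
      ultimately show "B \<in> Q \<inter> Om" using A by (simp add: Q_def)
    qed
    show "Q \<inter> Om \<subseteq> (\<lambda>A. rtrans gm A a) ` U"
    proof
      fix B assume B: "B \<in> Q \<inter> Om"
      define A where "A = rtrans gm B (ginv a)"
      have AO: "A \<in> Op" using B by (simp add: Q_def A_def)
      have AOm: "A \<in> Om" using part1 B aP by (simp add: Q_def A_def)
      have "rtrans gm A a = B" by (simp add: A_def rtrans_comp rtrans_e)
      thus "B \<in> (\<lambda>A. rtrans gm A a) ` U" using AO AOm Op(2) by blast
    qed
  qed
  have key: "f \<in> chf ` Q \<longleftrightarrow> f \<in> {f. f a} \<inter> (\<lambda>f. \<lambda>g. f (gm g a)) -` (chf ` Op)" for f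
  proof -
    have c: "chf (rtrans gm (Collect f) (ginv a)) = (\<lambda>g. f (gm g a))"
      by (simp add: chf_def rtrans_mem fun_eq_iff)
    have "f \<in> chf ` Q \<longleftrightarrow> Collect f \<in> Q" by (simp add: chf_image)
    also have "\<dots> \<longleftrightarrow> f a \<and> rtrans gm (Collect f) (ginv a) \<in> Op" by (simp add: Q_def)
    also have "\<dots> \<longleftrightarrow> f a \<and> chf (rtrans gm (Collect f) (ginv a)) \<in> chf ` Op"
      by (simp only: inj_image_mem_iff[OF chf_inj])
    also have "\<dots> \<longleftrightarrow> f \<in> {f. f a} \<inter> (\<lambda>f. \<lambda>g. f (gm g a)) -` (chf ` Op)"
      unfolding c by simp
    finally show ?thesis .
  qed
  have "chf ` Q = {f. f a} \<inter> (\<lambda>f. \<lambda>g. f (gm g a)) -` (chf ` Op)"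
    by (rule set_eqI) (rule key)
  moreover have "open ({f. f a} \<inter> (\<lambda>f. \<lambda>g. f (gm g a)) -` (chf ` Op))"
    using Op(1) unfolding openin_powset by (intro open_Int open_coord open_shift)
  ultimately have "open (chf ` Q)" by simp
  hence "openin powset_top Q" by (simp add: openin_powset)
  thus ?thesis unfolding eq openin_subtopology by blast
qed

lemma part3:
  "open_map (prod_topology (subtopology powset_top Om) (discrete_topology P))
     (subtopology powset_top Om) (\<lambda>(A, a). rtrans gm A a)"
  unfolding open_map_def
proof (intro allI impI)
  fix S assume S: "openin (prod_topology (subtopology powset_top Om) (discrete_topology P)) S"
  show "openin (subtopology powset_top Om) ((\<lambda>(A, a). rtrans gm A a) ` S)"
    unfolding openin_subopen[of _ "(\<lambda>(A, a). rtrans gm A a) ` S"]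
  proof
    fix y assume "y \<in> (\<lambda>(A, a). rtrans gm A a) ` S"
    then obtain A a where Aa: "(A, a) \<in> S" "y = rtrans gm A a" by auto
    obtain U W where UW: "openin (subtopology powset_top Om) U" "openin (discrete_topology P) W"
      "A \<in> U" "a \<in> W" "U \<times> W \<subseteq> S"
    proof -
      have h: "\<forall>x y. (x, y) \<in> S \<longrightarrow> (\<exists>U V. openin (subtopology powset_top Om) U \<and> openin (discrete_topology P) V \<and> x \<in> U \<and> y \<in> V \<and> U \<times> V \<subseteq> S)"
        using S by (simp only: openin_prod_topology_alt)
      show ?thesis using h[rule_format, OF Aa(1)] that by blast
    qed
    have aP: "a \<in> P" using UW(2,4) by auto
    have "(\<lambda>A. rtrans gm A a) ` U \<subseteq> (\<lambda>(A, a). rtrans gm A a) ` S"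
      using UW(4,5) by (auto intro!: image_eqI)
    moreover have "y \<in> (\<lambda>A. rtrans gm A a) ` U" using Aa(2) UW(3) by blast
    ultimately show "\<exists>T. openin (subtopology powset_top Om) T \<and> y \<in> T \<and> T \<subseteq> (\<lambda>(A, a). rtrans gm A a) ` S"
      using image_open[OF UW(1) aP] by blast
  qed
qed

end



theorem mainTheorem4:
  fixes gm :: "'g \<Rightarrow> 'g \<Rightarrow> 'g" and e :: 'g and ginv :: "'g \<Rightarrow> 'g"
    and P :: "'g set" and V :: "'g \<Rightarrow> 'i op"
  assumes grp: "group gm e ginv"
    and P_semigroup: "\<forall>a\<in>P. \<forall>b\<in>P. gm a b \<in> P"
    and e_in_P: "e \<in> P"
    and P_generates: "{gm a (ginv b) | a b. a \<in> P \<and> b \<in> P} = UNIV"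
    and V_isom: "\<forall>a\<in>P. isometry (V a)"
    and V_mult: "\<forall>a\<in>P. \<forall>b\<in>P. V a \<circ> V b = V (gm b a)"
    and V_commuting: "\<forall>a\<in>P. \<forall>b\<in>P.
           (V a \<circ> adj (V a)) \<circ> (V b \<circ> adj (V b)) = (V b \<circ> adj (V b)) \<circ> (V a \<circ> adj (V a))"
  shows "(\<forall>A\<in>Omega gm ginv P V. \<forall>a\<in>P.
            rtrans gm A (ginv a) \<in> Omega gm ginv P V \<longleftrightarrow> a \<in> A)
       \<and> (\<forall>A\<in>Omega gm ginv P V. \<forall>g.
            rtrans gm A g \<in> Omega gm ginv P V \<longleftrightarrow> ginv g \<in> A)
       \<and> open_map
           (prod_topology (subtopology powset_top (Omega gm ginv P V)) (discrete_topology P))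
           (subtopology powset_top (Omega gm ginv P V))
           (\<lambda>(A, a). rtrans gm A a)"
proof -
  have R: "rep gm e ginv P V"
    unfolding rep_def using grp P_semigroup e_in_P P_generates V_isom V_mult V_commuting by blast
  interpret rep gm e ginv P V by (rule R)
  show ?thesis using part1 part2 part3 by blast
qed

end
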